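(* Let $1\le\nu<\infty$, let $\phi(z)=az+b$ with $0<|a|<1$, $b\in\mathbb{C}$, and let $w(z)=e^{p+qz+rz^2}$ with $p,q,r\in\mathbb{C}$ and $0<|r|\le(1-|a|^2)/2$, and assume $W_{w,\phi}$ is bounded on $\mathcal{F}^\nu$. Then: if $\operatorname{Re}p+\operatorname{Re}\left(\frac{qb}{1-a}\right)+\operatorname{Re}\left(\frac{rb^2}{(1-a)^2}\right)>0$, the operator $W_{w,\phi}$ is not power-bounded on $\mathcal{F}^\nu$; if $\operatorname{Re}p+\operatorname{Re}\left(\frac{qb}{1-a}\right)+\operatorname{Re}\left(\frac{rb^2}{(1-a)^2}\right)-\ln|a|<0$, the operator $W_{w,\phi}$ is power-bounded on $\mathcal{F}^\nu$.
   Context: For $1\le\nu<\infty$, $\mathcal{F}^\nu$ is the space of entire functions $f$ with $\|f\|_\nu:=\left(\frac{\nu}{2\pi}\int_{\mathbb{C}}|f(z)|^\nu e^{-\nu|z|^2/2}\,dm(z)\right)^{1/\nu}<\infty$. $W_{w,\phi}f=w\,(f\circ\phi)$. An operator $T$ is power-bounded if $\sup_{n\ge1}\|T^n\|<\infty$. *)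

theory Defs
  imports "HOL-Analysis.Analysis"
begin

definition fock_integral :: "real \<Rightarrow> (complex \<Rightarrow> complex) \<Rightarrow> ennreal" where
  "fock_integral \<nu> f =
     (\<integral>\<^sup>+ z. ennreal (norm (f z) powr \<nu> * exp (- \<nu> * (norm z)\<^sup>2 / 2)) \<partial>lborel)"

definition fock_space :: "real \<Rightarrow> (complex \<Rightarrow> complex) set" where
  "fock_space \<nu> = {f. f holomorphic_on UNIV \<and> fock_integral \<nu> f < \<infinity>}"

definition fock_norm :: "real \<Rightarrow> (complex \<Rightarrow> complex) \<Rightarrow> real" where
  "fock_norm \<nu> f = (\<nu> / (2 * pi) * enn2real (fock_integral \<nu> f)) powr (1 / \<nu>)"

definition wcomp :: "(complex \<Rightarrow> complex) \<Rightarrow> (complex \<Rightarrow> complex)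
                    \<Rightarrow> (complex \<Rightarrow> complex) \<Rightarrow> (complex \<Rightarrow> complex)" where
  "wcomp w \<phi> f = (\<lambda>z. w z * f (\<phi> z))"

definition bounded_on_fock :: "real \<Rightarrow> ((complex \<Rightarrow> complex) \<Rightarrow> (complex \<Rightarrow> complex)) \<Rightarrow> bool" where
  "bounded_on_fock \<nu> T \<longleftrightarrow>
     (\<forall>f\<in>fock_space \<nu>. T f \<in> fock_space \<nu>) \<and>
     (\<exists>C. \<forall>f\<in>fock_space \<nu>. fock_norm \<nu> (T f) \<le> C * fock_norm \<nu> f)"

definition power_bounded_on_fock :: "real \<Rightarrow> ((complex \<Rightarrow> complex) \<Rightarrow> (complex \<Rightarrow> complex)) \<Rightarrow> bool" where
  "power_bounded_on_fock \<nu> T \<longleftrightarrow>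
     (\<exists>C. \<forall>n\<ge>1. \<forall>f\<in>fock_space \<nu>. fock_norm \<nu> ((T ^^ n) f) \<le> C * fock_norm \<nu> f)"

end

theory Submission
  imports Defs "HOL-Probability.Distributions" "HOL-Complex_Analysis.Complex_Analysis"
begin

lemma borel_measurable_Complex[measurable (raw)]:
  fixes f h :: "'a \<Rightarrow> real"
  assumes [measurable]: "f \<in> borel_measurable M" "h \<in> borel_measurable M"
  shows "(\<lambda>x. Complex (f x) (h x)) \<in> borel_measurable M"
proof -
  have "(\<lambda>x. complex_of_real (f x) + \<i> * complex_of_real (h x)) \<in> borel_measurable M"
    by measurable
  then show ?thesis by (simp add: Complex_eq)
qed

lemma measurable_Complex_pair[measurable]:
  "(\<lambda>(x,y). Complex x y) \<in> borel_measurable (lborel \<Otimes>\<^sub>M lborel)"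
proof -
  have "continuous_on UNIV (\<lambda>p::real\<times>real. complex_of_real (fst p) + \<i> * complex_of_real (snd p))"
    by (intro continuous_intros)
  then have "(\<lambda>p::real\<times>real. complex_of_real (fst p) + \<i> * complex_of_real (snd p)) \<in> borel_measurable borel"
    by (rule borel_measurable_continuous_onI)
  moreover have "sets (lborel \<Otimes>\<^sub>M lborel) = sets (borel :: (real\<times>real) measure)"
    by (subst borel_prod[symmetric]) (rule sets_pair_measure_cong; simp)
  ultimately show ?thesis
    by (simp add: case_prod_beta' Complex_eq cong: measurable_cong_sets)
qed

lemma lborel_complex_distr:
  "distr (lborel \<Otimes>\<^sub>M lborel) borel (\<lambda>(x,y). Complex x y) = (lborel :: complex measure)"
proof (rule lborel_eqI[symmetric])
  fix l u :: complex
  assume le: "\<And>b. b \<in> Basis \<Longrightarrow> l \<bullet> b \<le> u \<bullet> b"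
  have le1: "Re l \<le> Re u" "Im l \<le> Im u" using le[of 1] le[of \<i>] by (auto simp: Basis_complex_def)
  have eq: "(\<lambda>(x,y). Complex x y) -` box l u \<inter> space (lborel \<Otimes>\<^sub>M lborel) = {Re l<..<Re u} \<times> {Im l<..<Im u}"
    by (auto simp: in_box_complex_iff space_pair_measure)
  show "emeasure (distr (lborel \<Otimes>\<^sub>M lborel) borel (\<lambda>(x,y). Complex x y)) (box l u) = (\<Prod>b\<in>Basis. (u - l) \<bullet> b)"
    using le1
    by (simp add: emeasure_distr eq lborel.emeasure_pair_measure_Times Basis_complex_def ennreal_mult)
qed simp

lemma nn_integral_complex:
  fixes f :: "complex \<Rightarrow> ennreal"
  assumes [measurable]: "f \<in> borel_measurable borel"
  shows "(\<integral>\<^sup>+z. f z \<partial>lborel) = (\<integral>\<^sup>+x. \<integral>\<^sup>+y. f (Complex x y) \<partial>lborel \<partial>lborel)"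
proof -
  have "(\<integral>\<^sup>+z. f z \<partial>lborel) = (\<integral>\<^sup>+z. f z \<partial>distr (lborel \<Otimes>\<^sub>M lborel) borel (\<lambda>(x,y). Complex x y))"
    by (simp add: lborel_complex_distr)
  also have "\<dots> = (\<integral>\<^sup>+p. f (case p of (x,y) \<Rightarrow> Complex x y) \<partial>(lborel \<Otimes>\<^sub>M lborel))"
    by (rule nn_integral_distr) auto
  also have "\<dots> = (\<integral>\<^sup>+x. \<integral>\<^sup>+y. f (Complex x y) \<partial>lborel \<partial>lborel)"
    by (subst lborel.nn_integral_fst[symmetric]) (auto simp: case_prod_beta')
  finally show ?thesis .
qed

lemma nn_integral_complex_translate:
  fixes f :: "complex \<Rightarrow> ennreal"
  assumes [measurable]: "f \<in> borel_measurable borel"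
  shows "(\<integral>\<^sup>+z. f (z + c) \<partial>lborel) = (\<integral>\<^sup>+z. f z \<partial>lborel)"
proof -
  have "(\<integral>\<^sup>+z. f z \<partial>lborel) = (\<integral>\<^sup>+z. f z \<partial>distr lborel borel ((+) c))"
    by (simp add: lborel_distr_plus)
  also have "\<dots> = (\<integral>\<^sup>+z. f (c + z) \<partial>lborel)"
    by (rule nn_integral_distr) auto
  finally show ?thesis by (simp add: add.commute)
qed

lemma gauss_nn_integral_finite:
  fixes k :: real assumes k: "k > 0"
  shows "(\<integral>\<^sup>+t. ennreal (exp (- k * t\<^sup>2)) \<partial>lborel) < \<infinity>"
proof -
  define c where "c = 1 / sqrt (2 * k)"
  have c: "c > 0" using k by (simp add: c_def)
  have "(\<integral>\<^sup>+t. ennreal (std_normal_density t) \<partial>lborel) < \<infinity>"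
    by (subst nn_integral_eq_integral) auto

  then have "\<bar>c\<bar> * (\<integral>\<^sup>+t. ennreal (std_normal_density (0 + (1/c) * t)) \<partial>lborel) < \<infinity>"
    using c by (subst (asm) nn_integral_real_affine[where c = "1/c" and t = 0]) (auto simp: ennreal_mult_less_top)
  then have fin: "(\<integral>\<^sup>+t. ennreal (std_normal_density ((1/c) * t)) \<partial>lborel) < \<infinity>"
    using c by (auto simp: ennreal_mult_less_top)
  have eq: "ennreal (exp (- k * t\<^sup>2)) = ennreal (sqrt (2*pi)) * ennreal (std_normal_density ((1/c) * t))" for t
  proof -
    have "((1/c) * t)\<^sup>2 / 2 = k * t\<^sup>2" using k by (simp add: c_def power2_eq_square field_simps)
    then show ?thesis by (simp add: std_normal_density_def ennreal_mult[symmetric])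
  qed
  have "(\<integral>\<^sup>+t. ennreal (exp (- k * t\<^sup>2)) \<partial>lborel) = ennreal (sqrt (2*pi)) * (\<integral>\<^sup>+t. ennreal (std_normal_density ((1/c) * t)) \<partial>lborel)"
    by (simp only: eq) (rule nn_integral_cmult; simp)
  then show ?thesis
    using fin by (simp add: ennreal_mult_less_top)
qed

lemma side_bound:
  fixes g :: "complex \<Rightarrow> complex"
  assumes g: "g holomorphic_on UNIV" and s: "s > 0" and AB: "norm (B - A) = 2 * s"
    and far: "\<And>t. t \<in> {0..1} \<Longrightarrow> s \<le> norm (linepath A B t)"
  shows "(\<lambda>w. g w / w) contour_integrable_on linepath A B"
    "norm (contour_integral (linepath A B) (\<lambda>w. g w / w)) \<le> 2 * integral {0..1} (\<lambda>t. norm (g (linepath A B t)))"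
proof -
  have nz: "0 \<notin> path_image (linepath A B)"
    using far s by (force simp: path_image_def)
  have contg: "continuous_on UNIV g" using g holomorphic_on_imp_continuous_on by blast
  have cf: "continuous_on (path_image (linepath A B)) (\<lambda>w. g w / w)"
    using nz by (intro continuous_intros continuous_on_subset[OF contg]) auto
  then show ci: "(\<lambda>w. g w / w) contour_integrable_on linepath A B"
    by (intro contour_integrable_continuous_linepath) simp
  have cl: "continuous_on {0..1} (linepath A B)" by (simp add: continuous_on_linepath)
  have c1: "continuous_on {0..1} (\<lambda>t. g (linepath A B t) / linepath A B t * (B - A))"
  proof -
    have "continuous_on {0..1} ((\<lambda>w. g w / w) \<circ> linepath A B)"
      by (rule continuous_on_compose[OF cl]) (metis cf path_image_def)
    then have h: "continuous_on {0..1} (\<lambda>t. g (linepath A B t) / linepath A B t)" by (simp add: o_def)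
    show ?thesis using continuous_on_mult[OF h continuous_on_const] .
  qed
  have c2: "continuous_on {0..1} (\<lambda>t. 2 * norm (g (linepath A B t)))"
    by (intro continuous_intros continuous_on_compose2[OF contg cl]) auto
  have "norm (integral {0..1} (\<lambda>t. g (linepath A B t) / linepath A B t * (B - A)))
      \<le> integral {0..1} (\<lambda>t. 2 * norm (g (linepath A B t)))"
  proof (rule integral_norm_bound_integral)
    show "(\<lambda>t. g (linepath A B t) / linepath A B t * (B - A)) integrable_on {0..1}"
      using c1 integrable_continuous_interval by blast
    show "(\<lambda>t. 2 * norm (g (linepath A B t))) integrable_on {0..1}"
      using c2 integrable_continuous_interval by blast
    fix t :: real assume t: "t \<in> {0..1}"
    have st: "s \<le> norm (linepath A B t)" using far t by blast
    have "norm (g (linepath A B t) / linepath A B t * (B - A)) = norm (g (linepath A B t)) * (2 * s) / norm (linepath A B t)"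
      by (simp add: norm_divide norm_mult AB)
    also have "\<dots> \<le> norm (g (linepath A B t)) * (2 * s) / s"
      using st s by (intro divide_left_mono) (auto intro!: mult_pos_pos)
    also have "\<dots> = 2 * norm (g (linepath A B t))" using s by simp
    finally show "norm (g (linepath A B t) / linepath A B t * (B - A)) \<le> 2 * norm (g (linepath A B t))" .
  qed
  then show "norm (contour_integral (linepath A B) (\<lambda>w. g w / w)) \<le> 2 * integral {0..1} (\<lambda>t. norm (g (linepath A B t)))"
    by (simp add: contour_integral_integral)
qed

lemma square_cauchy:
  fixes g :: "complex \<Rightarrow> complex"
  assumes g: "g holomorphic_on UNIV" and s: "s > 0"
  shows "pi * norm (g 0) \<le>
     integral {0..1} (\<lambda>t. norm (g (linepath (Complex (-s) (-s)) (Complex s (-s)) t))) +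
     integral {0..1} (\<lambda>t. norm (g (linepath (Complex s (-s)) (Complex s s) t))) +
     integral {0..1} (\<lambda>t. norm (g (linepath (Complex s s) (Complex (-s) s) t))) +
     integral {0..1} (\<lambda>t. norm (g (linepath (Complex (-s) s) (Complex (-s) (-s)) t)))"
proof -
  define a1 a2 a3 a4 where "a1 = Complex (-s) (-s)" and "a2 = Complex s (-s)"
    and "a3 = Complex s s" and "a4 = Complex (-s) s"
  define f where "f = (\<lambda>w. g w / w)"
  have lp: "linepath a b t = Complex ((1 - t) * Re a + t * Re b) ((1 - t) * Im a + t * Im b)" for a b t
    by (simp add: linepath_def complex_eq_iff)
  have far1: "s \<le> norm (linepath a1 a2 t)" for t
    using abs_Im_le_cmod[of "linepath a1 a2 t"] s by (simp add: lp a1_def a2_def algebra_simps)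
  have far2: "s \<le> norm (linepath a2 a3 t)" for t
    using abs_Re_le_cmod[of "linepath a2 a3 t"] s by (simp add: lp a2_def a3_def algebra_simps)
  have far3: "s \<le> norm (linepath a3 a4 t)" for t
    using abs_Im_le_cmod[of "linepath a3 a4 t"] s by (simp add: lp a3_def a4_def algebra_simps)
  have far4: "s \<le> norm (linepath a4 a1 t)" for t
    using abs_Re_le_cmod[of "linepath a4 a1 t"] s by (simp add: lp a4_def a1_def algebra_simps)
  have n12: "norm (a2 - a1) = 2 * s" and n23: "norm (a3 - a2) = 2 * s"
    and n34: "norm (a4 - a3) = 2 * s" and n41: "norm (a1 - a4) = 2 * s"
    using s by (simp_all add: a1_def a2_def a3_def a4_def cmod_def real_sqrt_mult power_mult_distrib[symmetric])
  note S1 = side_bound[OF g s n12 far1] and S2 = side_bound[OF g s n23 far2]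
    and S3 = side_bound[OF g s n34 far3] and S4 = side_bound[OF g s n41 far4]
  have box0: "0 \<in> box a1 a3" using s by (simp add: a1_def a3_def in_box_complex_iff)
  have "((\<lambda>w. g w / (w - 0)) has_contour_integral (complex_of_real (2 * pi) * \<i> * winding_number (rectpath a1 a3) 0 * g 0)) (rectpath a1 a3)"
  proof (rule Cauchy_integral_formula_convex_simple[where S = UNIV])
    show "path_image (rectpath a1 a3) \<subseteq> UNIV - {0}"
      using box0 path_image_rectpath_cbox_minus_box[of a1 a3] s
      by (auto simp: a1_def a3_def)
  qed (use g in auto)
  then have C1: "(f has_contour_integral (complex_of_real (2 * pi) * \<i> * g 0)) (rectpath a1 a3)"
    using winding_number_rectpath[OF box0] by (simp add: f_def)
  have C2: "(f has_contour_integral (contour_integral (linepath a1 a2) f + (contour_integral (linepath a2 a3) f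
      + (contour_integral (linepath a3 a4) f + contour_integral (linepath a4 a1) f)))) (rectpath a1 a3)"
    unfolding rectpath_def Let_def f_def
    using S1(1) S2(1) S3(1) S4(1)
    by (simp add: a1_def a2_def a3_def a4_def has_contour_integral_integral has_contour_integral_join)
  have eq: "complex_of_real (2 * pi) * \<i> * g 0 = contour_integral (linepath a1 a2) f + (contour_integral (linepath a2 a3) f
      + (contour_integral (linepath a3 a4) f + contour_integral (linepath a4 a1) f))"
    using has_contour_integral_unique[OF C1 C2] .
  have "2 * pi * norm (g 0) = norm (complex_of_real (2 * pi) * \<i> * g 0)" by (simp add: norm_mult)
  also have "\<dots> \<le> norm (contour_integral (linepath a1 a2) f) + (norm (contour_integral (linepath a2 a3) f)
      + (norm (contour_integral (linepath a3 a4) f) + norm (contour_integral (linepath a4 a1) f)))"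
    unfolding eq by (intro order.trans[OF norm_triangle_ineq] add_mono order.refl)
  finally show ?thesis
    using S1(2) S2(2) S3(2) S4(2) unfolding f_def a1_def a2_def a3_def a4_def by linarith
qed

lemma nn_integral_segment:
  fixes F :: "real \<Rightarrow> ennreal"
  assumes [measurable]: "F \<in> borel_measurable borel" and ab: "\<alpha> \<noteq> \<beta>"
  shows "(\<integral>\<^sup>+t. F (\<alpha> + t * (\<beta> - \<alpha>)) * indicator {0..1} t \<partial>lborel)
       = ennreal (1 / \<bar>\<beta> - \<alpha>\<bar>) * (\<integral>\<^sup>+x. F x * indicator {min \<alpha> \<beta>..max \<alpha> \<beta>} x \<partial>lborel)"
proof -
  have c: "\<beta> - \<alpha> \<noteq> 0" using ab by simp
  have mem: "\<alpha> + (\<beta> - \<alpha>) * t \<in> {min \<alpha> \<beta>..max \<alpha> \<beta>} \<longleftrightarrow> t \<in> {0..1}" for t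
  proof (cases "\<alpha> < \<beta>")
    case True
    have "\<alpha> + (\<beta> - \<alpha>) * t \<in> {min \<alpha> \<beta>..max \<alpha> \<beta>} \<longleftrightarrow> 0 \<le> (\<beta> - \<alpha>) * t \<and> (\<beta> - \<alpha>) * t \<le> (\<beta> - \<alpha>) * 1"
      using True by (auto simp: algebra_simps)
    also have "\<dots> \<longleftrightarrow> t \<in> {0..1}" using True by (simp add: zero_le_mult_iff mult_le_cancel_left)
    finally show ?thesis .
  next
    case False
    then have F: "\<beta> < \<alpha>" using ab by simp
    have "\<alpha> + (\<beta> - \<alpha>) * t \<in> {min \<alpha> \<beta>..max \<alpha> \<beta>} \<longleftrightarrow> 0 \<le> (\<alpha> - \<beta>) * t \<and> (\<alpha> - \<beta>) * t \<le> (\<alpha> - \<beta>) * 1"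
      using F by (auto simp: algebra_simps)
    also have "\<dots> \<longleftrightarrow> t \<in> {0..1}" using F by (simp add: zero_le_mult_iff mult_le_cancel_left)
    finally show ?thesis .
  qed
  have ind: "indicator {min \<alpha> \<beta>..max \<alpha> \<beta>} (\<alpha> + (\<beta> - \<alpha>) * t) = (indicator {0..1} t :: ennreal)" for t
    using mem[of t] by (simp add: indicator_def)
  have ind2: "indicator {min \<alpha> \<beta>..max \<alpha> \<beta>} (\<alpha> + t * (\<beta> - \<alpha>)) = (indicator {0..1} t :: ennreal)" for t
    using ind[of t] by (simp add: mult.commute)
  have "(\<integral>\<^sup>+x. F x * indicator {min \<alpha> \<beta>..max \<alpha> \<beta>} x \<partial>lborel)
      = ennreal \<bar>\<beta> - \<alpha>\<bar> * (\<integral>\<^sup>+t. F (\<alpha> + (\<beta> - \<alpha>) * t) * indicator {min \<alpha> \<beta>..max \<alpha> \<beta>} (\<alpha> + (\<beta> - \<alpha>) * t) \<partial>lborel)"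
    by (rule nn_integral_real_affine[OF _ c]) simp
  also have "\<dots> = ennreal \<bar>\<beta> - \<alpha>\<bar> * (\<integral>\<^sup>+t. F (\<alpha> + t * (\<beta> - \<alpha>)) * indicator {0..1} t \<partial>lborel)"
    by (simp only: mult.commute[of "\<beta> - \<alpha>"] ind2)
  finally have "(\<integral>\<^sup>+x. F x * indicator {min \<alpha> \<beta>..max \<alpha> \<beta>} x \<partial>lborel)
      = ennreal \<bar>\<beta> - \<alpha>\<bar> * (\<integral>\<^sup>+t. F (\<alpha> + t * (\<beta> - \<alpha>)) * indicator {0..1} t \<partial>lborel)" .
  then show ?thesis
    using c by (simp add: ennreal_mult[symmetric] mult.assoc[symmetric] divide_ennreal ennreal_1[symmetric]
        del: ennreal_1) (simp add: ennreal_mult'[symmetric])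
qed

lemma side_ennreal:
  fixes G :: "complex \<Rightarrow> real"
  assumes G: "continuous_on UNIV G" "\<And>z. 0 \<le> G z"
  shows "ennreal (integral {0..1} (\<lambda>t. G (linepath A B t))) = (\<integral>\<^sup>+t. ennreal (G (linepath A B t)) * indicator {0..1} t \<partial>lborel)"
proof -
  have "continuous_on {0..1} (\<lambda>t. G (linepath A B t))"
    by (intro continuous_on_compose2[OF G(1)] continuous_on_linepath) auto
  then have "((\<lambda>t. G (linepath A B t)) has_integral (integral {0..1} (\<lambda>t. G (linepath A B t)))) {0..1}"
    using integrable_continuous_interval by blast
  from nn_integral_has_integral_lebesgue'[OF _ this] G(2) show ?thesis by simp
qed

lemma side_h:
  fixes G :: "complex \<Rightarrow> real"
  assumes G: "continuous_on UNIV G" "\<And>z. 0 \<le> G z"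
    and ab: "2 \<le> \<bar>\<beta> - \<alpha>\<bar>" "\<alpha> \<in> {-2..2}" "\<beta> \<in> {-2..2}"
  shows "(\<integral>\<^sup>+t. ennreal (G (Complex (\<alpha> + t * (\<beta> - \<alpha>)) y0)) * indicator {0..1} t \<partial>lborel)
     \<le> ennreal (1/2) * (\<integral>\<^sup>+x. ennreal (G (Complex x y0)) * indicator {-2..2} x \<partial>lborel)"
proof -
  have [measurable]: "G \<in> borel_measurable borel" using G(1) borel_measurable_continuous_onI by blast
  have "(\<integral>\<^sup>+t. ennreal (G (Complex (\<alpha> + t * (\<beta> - \<alpha>)) y0)) * indicator {0..1} t \<partial>lborel)
     = ennreal (1 / \<bar>\<beta> - \<alpha>\<bar>) * (\<integral>\<^sup>+x. ennreal (G (Complex x y0)) * indicator {min \<alpha> \<beta>..max \<alpha> \<beta>} x \<partial>lborel)"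
    using ab by (intro nn_integral_segment[where F = "\<lambda>x. ennreal (G (Complex x y0))"]) auto
  also have "\<dots> \<le> ennreal (1/2) * (\<integral>\<^sup>+x. ennreal (G (Complex x y0)) * indicator {-2..2} x \<partial>lborel)"
  proof (rule mult_mono[OF _ nn_integral_mono])
    show "ennreal (1 / \<bar>\<beta> - \<alpha>\<bar>) \<le> ennreal (1 / 2)" using ab by (intro ennreal_leI) (auto simp: field_simps)
    fix x :: real assume "x \<in> space lborel" show "ennreal (G (Complex x y0)) * indicator {min \<alpha> \<beta>..max \<alpha> \<beta>} x \<le> ennreal (G (Complex x y0)) * indicator {-2..2} x"
      using ab by (intro mult_left_mono) (auto simp: indicator_def)
  qed auto
  finally show ?thesis .
qed

lemma side_v:
  fixes G :: "complex \<Rightarrow> real"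
  assumes G: "continuous_on UNIV G" "\<And>z. 0 \<le> G z"
    and ab: "2 \<le> \<bar>\<beta> - \<alpha>\<bar>" "\<alpha> \<in> {-2..2}" "\<beta> \<in> {-2..2}"
  shows "(\<integral>\<^sup>+t. ennreal (G (Complex x0 (\<alpha> + t * (\<beta> - \<alpha>)))) * indicator {0..1} t \<partial>lborel)
     \<le> ennreal (1/2) * (\<integral>\<^sup>+y. ennreal (G (Complex x0 y)) * indicator {-2..2} y \<partial>lborel)"
proof -
  have [measurable]: "G \<in> borel_measurable borel" using G(1) borel_measurable_continuous_onI by blast
  have "(\<integral>\<^sup>+t. ennreal (G (Complex x0 (\<alpha> + t * (\<beta> - \<alpha>)))) * indicator {0..1} t \<partial>lborel)
     = ennreal (1 / \<bar>\<beta> - \<alpha>\<bar>) * (\<integral>\<^sup>+y. ennreal (G (Complex x0 y)) * indicator {min \<alpha> \<beta>..max \<alpha> \<beta>} y \<partial>lborel)"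
    using ab by (intro nn_integral_segment[where F = "\<lambda>y. ennreal (G (Complex x0 y))"]) auto
  also have "\<dots> \<le> ennreal (1/2) * (\<integral>\<^sup>+y. ennreal (G (Complex x0 y)) * indicator {-2..2} y \<partial>lborel)"
  proof (rule mult_mono[OF _ nn_integral_mono])
    show "ennreal (1 / \<bar>\<beta> - \<alpha>\<bar>) \<le> ennreal (1 / 2)" using ab by (intro ennreal_leI) (auto simp: field_simps)
    fix y :: real assume "y \<in> space lborel" show "ennreal (G (Complex x0 y)) * indicator {min \<alpha> \<beta>..max \<alpha> \<beta>} y \<le> ennreal (G (Complex x0 y)) * indicator {-2..2} y"
      using ab by (intro mult_left_mono) (auto simp: indicator_def)
  qed auto
  finally show ?thesis .
qed

lemma local_L1_pointwise:
  fixes g :: "complex \<Rightarrow> complex"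
  assumes g: "g holomorphic_on UNIV" and s: "s \<in> {1..2}"
  shows "ennreal (pi * norm (g 0)) \<le> ennreal (1/2) *
    ((\<integral>\<^sup>+x. ennreal (norm (g (Complex x (-s)))) * indicator {-2..2} x \<partial>lborel)
   + (\<integral>\<^sup>+y. ennreal (norm (g (Complex s y))) * indicator {-2..2} y \<partial>lborel)
   + (\<integral>\<^sup>+x. ennreal (norm (g (Complex x s))) * indicator {-2..2} x \<partial>lborel)
   + (\<integral>\<^sup>+y. ennreal (norm (g (Complex (-s) y))) * indicator {-2..2} y \<partial>lborel))"
proof -
  define G where "G = (\<lambda>z. norm (g z))"
  have contg: "continuous_on UNIV g" using g holomorphic_on_imp_continuous_on by blast
  have G: "continuous_on UNIV G" "\<And>z. 0 \<le> G z" unfolding G_def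
    by (auto intro!: continuous_intros contg)
  have s0: "s > 0" using s by auto
  define I where "I = (\<lambda>A B. integral {0..1} (\<lambda>t. G (linepath A B t)))"
  have Inn: "0 \<le> I A B" for A B
  proof -
    have "continuous_on {0..1} (\<lambda>t. G (linepath A B t))"
      by (intro continuous_on_compose2[OF G(1)] continuous_on_linepath) auto
    then show ?thesis unfolding I_def
      by (intro integral_nonneg integrable_continuous_interval) (use G(2) in auto)
  qed
  have "pi * G 0 \<le> I (Complex (-s) (-s)) (Complex s (-s)) + I (Complex s (-s)) (Complex s s)
      + I (Complex s s) (Complex (-s) s) + I (Complex (-s) s) (Complex (-s) (-s))"
    using square_cauchy[OF g s0] unfolding I_def G_def .
  then have "ennreal (pi * G 0) \<le> ennreal (I (Complex (-s) (-s)) (Complex s (-s))) + ennreal (I (Complex s (-s)) (Complex s s))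
      + ennreal (I (Complex s s) (Complex (-s) s)) + ennreal (I (Complex (-s) s) (Complex (-s) (-s)))"
    using Inn by (simp add: ennreal_plus[symmetric] add_nonneg_nonneg del: ennreal_plus)
  also have "\<dots> \<le> ennreal (1/2) * (\<integral>\<^sup>+x. ennreal (G (Complex x (-s))) * indicator {-2..2} x \<partial>lborel)
     + ennreal (1/2) * (\<integral>\<^sup>+y. ennreal (G (Complex s y)) * indicator {-2..2} y \<partial>lborel)
     + ennreal (1/2) * (\<integral>\<^sup>+x. ennreal (G (Complex x s)) * indicator {-2..2} x \<partial>lborel)
     + ennreal (1/2) * (\<integral>\<^sup>+y. ennreal (G (Complex (-s) y)) * indicator {-2..2} y \<partial>lborel)"
  proof (intro add_mono)
    have l1: "linepath (Complex (-s) (-s)) (Complex s (-s)) t = Complex (-s + t * (s - -s)) (-s)" for t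
      by (simp add: linepath_def complex_eq_iff algebra_simps)
    have l2: "linepath (Complex s (-s)) (Complex s s) t = Complex s (-s + t * (s - -s))" for t
      by (simp add: linepath_def complex_eq_iff algebra_simps)
    have l3: "linepath (Complex s s) (Complex (-s) s) t = Complex (s + t * (-s - s)) s" for t
      by (simp add: linepath_def complex_eq_iff algebra_simps)
    have l4: "linepath (Complex (-s) s) (Complex (-s) (-s)) t = Complex (-s) (s + t * (-s - s))" for t
      by (simp add: linepath_def complex_eq_iff algebra_simps)
    have ab1: "2 \<le> \<bar>s - - s\<bar>" "-s \<in> {-2..2}" "s \<in> {-2..2}" using s by auto
    have ab2: "2 \<le> \<bar>-s - s\<bar>" using s by auto
    show "ennreal (I (Complex (-s) (-s)) (Complex s (-s))) \<le> ennreal (1/2) * (\<integral>\<^sup>+x. ennreal (G (Complex x (-s))) * indicator {-2..2} x \<partial>lborel)"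
      unfolding I_def side_ennreal[OF G] unfolding l1 using side_h[OF G ab1] .
    show "ennreal (I (Complex s (-s)) (Complex s s)) \<le> ennreal (1/2) * (\<integral>\<^sup>+y. ennreal (G (Complex s y)) * indicator {-2..2} y \<partial>lborel)"
      unfolding I_def side_ennreal[OF G] unfolding l2 using side_v[OF G ab1] .
    show "ennreal (I (Complex s s) (Complex (-s) s)) \<le> ennreal (1/2) * (\<integral>\<^sup>+x. ennreal (G (Complex x s)) * indicator {-2..2} x \<partial>lborel)"
      unfolding I_def side_ennreal[OF G] unfolding l3 using side_h[OF G ab2 ab1(3) ab1(2)] .
    show "ennreal (I (Complex (-s) s) (Complex (-s) (-s))) \<le> ennreal (1/2) * (\<integral>\<^sup>+y. ennreal (G (Complex (-s) y)) * indicator {-2..2} y \<partial>lborel)"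
      unfolding I_def side_ennreal[OF G] unfolding l4 using side_v[OF G ab2 ab1(3) ab1(2)] .
  qed
  finally show ?thesis unfolding G_def by (simp add: distrib_left)
qed

lemma reflect_split:
  fixes F :: "real \<Rightarrow> ennreal"
  assumes [measurable]: "F \<in> borel_measurable borel"
  shows "(\<integral>\<^sup>+s. F (-s) * indicator {1..2} s \<partial>lborel) + (\<integral>\<^sup>+s. F s * indicator {1..2} s \<partial>lborel)
      \<le> (\<integral>\<^sup>+y. F y * indicator {-2..2} y \<partial>lborel)"
proof -
  have "(\<integral>\<^sup>+y. F y * indicator {-2..-1} y \<partial>lborel) = ennreal \<bar>-1\<bar> * (\<integral>\<^sup>+s. F (0 + -1 * s) * indicator {-2..-1} (0 + -1 * s) \<partial>lborel)"
    by (rule nn_integral_real_affine) auto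
  also have "\<dots> = (\<integral>\<^sup>+s. F (-s) * indicator {1..2} s \<partial>lborel)"
    by (auto intro!: nn_integral_cong simp: indicator_def)
  finally have r: "(\<integral>\<^sup>+s. F (-s) * indicator {1..2} s \<partial>lborel) = (\<integral>\<^sup>+y. F y * indicator {-2..-1} y \<partial>lborel)" ..
  have "(\<integral>\<^sup>+y. F y * indicator {-2..-1} y \<partial>lborel) + (\<integral>\<^sup>+s. F s * indicator {1..2} s \<partial>lborel)
     = (\<integral>\<^sup>+y. F y * indicator {-2..-1} y + F y * indicator {1..2} y \<partial>lborel)"
    by (rule nn_integral_add[symmetric]) auto
  also have "\<dots> \<le> (\<integral>\<^sup>+y. F y * indicator {-2..2} y \<partial>lborel)"
    by (intro nn_integral_mono) (auto simp: indicator_def)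
  finally show ?thesis unfolding r .
qed

lemma local_L1:
  fixes g :: "complex \<Rightarrow> complex"
  assumes g: "g holomorphic_on UNIV"
  shows "ennreal (pi * norm (g 0)) \<le> (\<integral>\<^sup>+z. ennreal (norm (g z)) * indicator (cbox (Complex (-2) (-2)) (Complex 2 2)) z \<partial>lborel)"
proof -
  have contg: "continuous_on UNIV g" using g holomorphic_on_imp_continuous_on by blast
  have [measurable]: "g \<in> borel_measurable borel" using contg borel_measurable_continuous_onI by blast
  define Hf where "Hf = (\<lambda>y. \<integral>\<^sup>+x. ennreal (norm (g (Complex x y))) * indicator {-2..2} x \<partial>lborel)"
  define Vf where "Vf = (\<lambda>x. \<integral>\<^sup>+y. ennreal (norm (g (Complex x y))) * indicator {-2..2} y \<partial>lborel)"
  have [measurable]: "Hf \<in> borel_measurable borel" unfolding Hf_def by measurable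
  have [measurable]: "Vf \<in> borel_measurable borel" unfolding Vf_def by measurable
  define E where "E = ennreal (pi * norm (g 0))"
  have "E = (\<integral>\<^sup>+s. E * indicator {1..2::real} s \<partial>lborel)"
    by (simp add: nn_integral_cmult_indicator)
  also have "\<dots> \<le> (\<integral>\<^sup>+s. (ennreal (1/2) * (Hf (-s) + Vf s + Hf s + Vf (-s))) * indicator {1..2} s \<partial>lborel)"
  proof (rule nn_integral_mono)
    fix s :: real assume "s \<in> space lborel"
    show "E * indicator {1..2} s \<le> (ennreal (1/2) * (Hf (-s) + Vf s + Hf s + Vf (-s))) * indicator {1..2} s"
    proof (cases "s \<in> {1..2}")
      case True
      then show ?thesis
        using local_L1_pointwise[OF g True] unfolding E_def Hf_def Vf_def by simp
    qed simp
  qed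
  also have "\<dots> = ennreal (1/2) * ((\<integral>\<^sup>+s. Hf (-s) * indicator {1..2} s \<partial>lborel) + (\<integral>\<^sup>+s. Hf s * indicator {1..2} s \<partial>lborel)
      + ((\<integral>\<^sup>+s. Vf (-s) * indicator {1..2} s \<partial>lborel) + (\<integral>\<^sup>+s. Vf s * indicator {1..2} s \<partial>lborel)))"
  proof -
    have "(\<integral>\<^sup>+s. (ennreal (1/2) * (Hf (-s) + Vf s + Hf s + Vf (-s))) * indicator {1..2} s \<partial>lborel)
      = (\<integral>\<^sup>+s. ennreal (1/2) * ((Hf (-s) * indicator {1..2} s + Hf s * indicator {1..2} s)
          + (Vf (-s) * indicator {1..2} s + Vf s * indicator {1..2} s)) \<partial>lborel)"
      by (intro nn_integral_cong) (simp add: algebra_simps)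
    also have "\<dots> = ennreal (1/2) * (\<integral>\<^sup>+s. (Hf (-s) * indicator {1..2} s + Hf s * indicator {1..2} s)
          + (Vf (-s) * indicator {1..2} s + Vf s * indicator {1..2} s) \<partial>lborel)"
      by (rule nn_integral_cmult) measurable
    also have "(\<integral>\<^sup>+s. (Hf (-s) * indicator {1..2} s + Hf s * indicator {1..2} s)
          + (Vf (-s) * indicator {1..2} s + Vf s * indicator {1..2} s) \<partial>lborel)
        = (\<integral>\<^sup>+s. Hf (-s) * indicator {1..2} s + Hf s * indicator {1..2} s \<partial>lborel)
          + (\<integral>\<^sup>+s. Vf (-s) * indicator {1..2} s + Vf s * indicator {1..2} s \<partial>lborel)"
      by (rule nn_integral_add) measurable
    also have "(\<integral>\<^sup>+s. Hf (-s) * indicator {1..2} s + Hf s * indicator {1..2} s \<partial>lborel)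
        = (\<integral>\<^sup>+s. Hf (-s) * indicator {1..2} s \<partial>lborel) + (\<integral>\<^sup>+s. Hf s * indicator {1..2} s \<partial>lborel)"
      by (rule nn_integral_add) measurable
    also have "(\<integral>\<^sup>+s. Vf (-s) * indicator {1..2} s + Vf s * indicator {1..2} s \<partial>lborel)
        = (\<integral>\<^sup>+s. Vf (-s) * indicator {1..2} s \<partial>lborel) + (\<integral>\<^sup>+s. Vf s * indicator {1..2} s \<partial>lborel)"
      by (rule nn_integral_add) measurable
    finally show ?thesis .
  qed
  also have "\<dots> \<le> ennreal (1/2) * ((\<integral>\<^sup>+y. Hf y * indicator {-2..2} y \<partial>lborel) + (\<integral>\<^sup>+x. Vf x * indicator {-2..2} x \<partial>lborel))"
    by (intro mult_left_mono add_mono reflect_split) auto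
  also have "(\<integral>\<^sup>+y. Hf y * indicator {-2..2} y \<partial>lborel) = (\<integral>\<^sup>+z. ennreal (norm (g z)) * indicator (cbox (Complex (-2) (-2)) (Complex 2 2)) z \<partial>lborel)"
  proof -
    have "(\<integral>\<^sup>+y. Hf y * indicator {-2..2} y \<partial>lborel) = (\<integral>\<^sup>+y. \<integral>\<^sup>+x. ennreal (norm (g (Complex x y))) * indicator {-2..2} x * indicator {-2..2} y \<partial>lborel \<partial>lborel)"
      unfolding Hf_def by (simp add: nn_integral_multc)
    also have "\<dots> = (\<integral>\<^sup>+x. \<integral>\<^sup>+y. ennreal (norm (g (Complex x y))) * indicator {-2..2} x * indicator {-2..2} y \<partial>lborel \<partial>lborel)"
      by (rule lborel_pair.Fubini') measurable
    also have "\<dots> = (\<integral>\<^sup>+z. ennreal (norm (g z)) * indicator (cbox (Complex (-2) (-2)) (Complex 2 2)) z \<partial>lborel)"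
      by (subst nn_integral_complex) (auto simp: in_cbox_complex_iff indicator_def intro!: nn_integral_cong)
    finally show ?thesis .
  qed
  also have "(\<integral>\<^sup>+x. Vf x * indicator {-2..2} x \<partial>lborel) = (\<integral>\<^sup>+z. ennreal (norm (g z)) * indicator (cbox (Complex (-2) (-2)) (Complex 2 2)) z \<partial>lborel)"
    unfolding Vf_def
    by (subst nn_integral_complex) (auto simp: in_cbox_complex_iff indicator_def nn_integral_multc[symmetric] intro!: nn_integral_cong)
  finally have "E \<le> ennreal (1/2) * (2 * (\<integral>\<^sup>+z. ennreal (norm (g z)) * indicator (cbox (Complex (-2) (-2)) (Complex 2 2)) z \<partial>lborel))"
    by (simp add: mult_2)
  also have "\<dots> = (ennreal (1/2) * ennreal 2) * (\<integral>\<^sup>+z. ennreal (norm (g z)) * indicator (cbox (Complex (-2) (-2)) (Complex 2 2)) z \<partial>lborel)"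
    by (simp add: mult.assoc)
  also have "ennreal (1/2) * ennreal 2 = 1" by (subst ennreal_mult[symmetric]) auto
  finally show ?thesis unfolding E_def by simp
qed

lemma young_pw:
  fixes x l v :: real
  assumes "0 \<le> x" "0 < l" "1 \<le> v"
  shows "x \<le> l + l powr (1 - v) * x powr v"
proof (cases "x \<le> l")
  case True
  have "0 \<le> l powr (1 - v) * x powr v" by simp
  then show ?thesis using True by linarith
next
  case False
  then have xl: "l < x" by simp
  then have x0: "0 < x" using assms by simp
  have "x = x powr v * x powr (1 - v)" using x0 by (simp add: powr_add[symmetric])
  also have "\<dots> \<le> x powr v * l powr (1 - v)"
    using assms xl by (intro mult_left_mono powr_mono2') auto
  finally have "x \<le> x powr v * l powr (1 - v)" .
  moreover have "x powr v * l powr (1 - v) = l powr (1 - v) * x powr v" by simp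
  ultimately show ?thesis using assms(2) by linarith
qed

lemma emeasure_box4: "emeasure lborel (cbox (Complex (-2) (-2)) (Complex 2 2)) = 16"
  by (subst emeasure_lborel_cbox) (auto simp: Basis_complex_def)

lemma local_Lnu:
  fixes g :: "complex \<Rightarrow> complex" and v :: real
  assumes g: "g holomorphic_on UNIV" and v: "1 \<le> v"
  shows "ennreal (norm (g 0) powr v) \<le> ennreal ((2/pi) * (32/pi) powr (v - 1)) *
     (\<integral>\<^sup>+z. ennreal (norm (g z) powr v) * indicator (cbox (Complex (-2) (-2)) (Complex 2 2)) z \<partial>lborel)"
proof -
  define B where "B = cbox (Complex (-2) (-2)) (Complex 2 2)"
  define A where "A = (\<integral>\<^sup>+z. ennreal (norm (g z) powr v) * indicator B z \<partial>lborel)"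
  define K where "K = (2/pi) * (32/pi) powr (v - 1)"
  have K: "K > 0" by (simp add: K_def)
  have contg: "continuous_on UNIV g" using g holomorphic_on_imp_continuous_on by blast
  have [measurable]: "g \<in> borel_measurable borel" using contg borel_measurable_continuous_onI by blast
  define a where "a = norm (g 0)"
  show ?thesis
  proof (cases "A = \<infinity>")
    case True then show ?thesis using K unfolding A_def B_def by (simp add: ennreal_mult_top)
  next
    case False
    then obtain A' where A': "A = ennreal A'" "0 \<le> A'" by (cases A) auto
    show ?thesis
    proof (cases "a = 0")
      case True then show ?thesis unfolding a_def using v by simp
    next
      case False
      then have a0: "a > 0" unfolding a_def by simp
      define l where "l = pi * a / 32"
      have l0: "l > 0" using a0 by (simp add: l_def)
      have "ennreal (pi * a) \<le> (\<integral>\<^sup>+z. ennreal (norm (g z)) * indicator B z \<partial>lborel)"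
        using local_L1[OF g] unfolding a_def B_def .
      also have "\<dots> \<le> (\<integral>\<^sup>+z. (ennreal l + ennreal (l powr (1 - v)) * ennreal (norm (g z) powr v)) * indicator B z \<partial>lborel)"
      proof (intro nn_integral_mono mult_right_mono)
        fix z
        have "norm (g z) \<le> l + l powr (1 - v) * norm (g z) powr v" by (rule young_pw[OF _ l0 v]) simp
        then have "ennreal (norm (g z)) \<le> ennreal (l + l powr (1 - v) * norm (g z) powr v)" by (rule ennreal_leI)
        then show "ennreal (norm (g z)) \<le> ennreal l + ennreal (l powr (1 - v)) * ennreal (norm (g z) powr v)"
          using l0 by (simp add: ennreal_plus ennreal_mult)
      qed auto
      also have "\<dots> = (\<integral>\<^sup>+z. ennreal l * indicator B z + ennreal (l powr (1 - v)) * (ennreal (norm (g z) powr v) * indicator B z) \<partial>lborel)"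
        by (intro nn_integral_cong) (simp add: algebra_simps)
      also have "\<dots> = ennreal l * emeasure lborel B + ennreal (l powr (1 - v)) * A"
        unfolding A_def
        by (subst nn_integral_add) (auto simp: nn_integral_cmult nn_integral_cmult_indicator B_def)
      also have "\<dots> = ennreal (16 * l + l powr (1 - v) * A')"
      proof -
        have e1: "ennreal l * 16 = ennreal (16 * l)" using l0 by (simp add: ennreal_mult mult.commute)
        have e2: "ennreal (l powr (1 - v)) * ennreal A' = ennreal (l powr (1 - v) * A')" using A' by (simp add: ennreal_mult)
        show ?thesis unfolding B_def emeasure_box4 A'(1) e1 e2
          using l0 A' by (subst ennreal_plus) auto
      qed
      finally have ineq: "pi * a \<le> 16 * l + l powr (1 - v) * A'"
        using l0 A' by (subst (asm) ennreal_le_iff) (auto intro!: add_nonneg_nonneg)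
      then have "pi * a / 2 \<le> l powr (1 - v) * A'" by (simp add: l_def)
      then have "(pi * a / 2) * l powr (v - 1) \<le> (l powr (1 - v) * A') * l powr (v - 1)"
        using l0 by (intro mult_right_mono) auto
      also have "\<dots> = A'" using l0 by (simp add: powr_add[symmetric] mult.commute mult.left_commute)
      finally have A'ge: "(pi * a / 2) * l powr (v - 1) \<le> A'" .
      have "(pi * a / 2) * l powr (v - 1) = (pi / 2) * (pi / 32) powr (v - 1) * a powr v"
      proof -
        have "l powr (v - 1) = (pi / 32) powr (v - 1) * a powr (v - 1)"
          unfolding l_def using a0 by (simp add: powr_mult[symmetric])
        moreover have "a * a powr (v - 1) = a powr v" using a0 by (simp add: powr_diff)
        ultimately show ?thesis by (simp add: algebra_simps)
      qed
      with A'ge have cX: "(pi / 2) * (pi / 32) powr (v - 1) * a powr v \<le> A'" by (simp only:)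
      have "(32 / pi) powr (v - 1) * (pi / 32) powr (v - 1) = ((32 / pi) * (pi / 32)) powr (v - 1)"
        by (simp add: powr_mult[symmetric])
      also have "\<dots> = 1" by simp
      finally have one: "K * ((pi / 2) * (pi / 32) powr (v - 1)) = 1" unfolding K_def
        by (simp add: field_simps)
      have "a powr v = K * ((pi / 2) * (pi / 32) powr (v - 1) * a powr v)"
        by (metis one mult.assoc mult_1)
      also have "\<dots> \<le> K * A'" using cX K by (intro mult_left_mono) auto
      finally have "a powr v \<le> K * A'" .
      then have "ennreal (a powr v) \<le> ennreal (K * A')" by (rule ennreal_leI)
      also have "ennreal (K * A') = ennreal K * A" unfolding A'(1) using K A'(2) by (intro ennreal_mult) auto
      finally have fin: "ennreal (a powr v) \<le> ennreal K * A" .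
      show ?thesis using fin unfolding a_def K_def A_def B_def .
    qed
  qed
qed

lemma norm_add_sq: "(norm (z + w))\<^sup>2 = (norm z)\<^sup>2 + (norm w)\<^sup>2 + 2 * Re (cnj z * w)"
  unfolding cmod_power2 by (simp add: power2_eq_square algebra_simps)

lemma exp_powr: "exp (t::real) powr v = exp (v * t)"
  by (simp add: powr_def)

lemma sq_le4: "-2 \<le> (x::real) \<Longrightarrow> x \<le> 2 \<Longrightarrow> x\<^sup>2 \<le> 4"
proof -
  assume "-2 \<le> x" "x \<le> 2"
  then have "\<bar>x\<bar> \<le> 2" by simp
  then have "\<bar>x\<bar>\<^sup>2 \<le> 2\<^sup>2" by (intro power_mono) auto
  then show ?thesis by simp
qed

lemma box4_norm: "z \<in> cbox (Complex (-2) (-2)) (Complex 2 2) \<Longrightarrow> (norm z)\<^sup>2 \<le> 8"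
  unfolding cmod_power2 using sq_le4[of "Re z"] sq_le4[of "Im z"] by (auto simp: in_cbox_complex_iff)

lemma fock_local:
  fixes f :: "complex \<Rightarrow> complex" and v :: real
  assumes f: "f holomorphic_on UNIV" and v: "1 \<le> v"
  shows "ennreal (norm (f \<zeta>) powr v * exp (- v * (norm \<zeta>)\<^sup>2 / 2)) \<le>
    ennreal ((2/pi) * (32/pi) powr (v - 1) * exp (4 * v)) *
     (\<integral>\<^sup>+\<eta>. ennreal (norm (f (\<zeta> + \<eta>)) powr v * exp (- v * (norm (\<zeta> + \<eta>))\<^sup>2 / 2)) * indicator (cbox (Complex (-2) (-2)) (Complex 2 2)) \<eta> \<partial>lborel)"
proof -
  define B where "B = cbox (Complex (-2) (-2)) (Complex 2 2)"
  define K where "K = (2/pi) * (32/pi) powr (v - 1)"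
  have K: "K > 0" by (simp add: K_def)
  define g where "g = (\<lambda>\<eta>. f (\<zeta> + \<eta>) * exp (- cnj \<zeta> * \<eta>))"
  have g: "g holomorphic_on UNIV" unfolding g_def
    by (intro holomorphic_intros holomorphic_on_compose_gen[OF _ f, unfolded o_def]) auto
  have [measurable]: "f \<in> borel_measurable borel"
    using f holomorphic_on_imp_continuous_on borel_measurable_continuous_onI by blast
  define W where "W = (\<lambda>z. norm (f z) powr v * exp (- v * (norm z)\<^sup>2 / 2))"
  have gW: "norm (g \<eta>) powr v = W (\<zeta> + \<eta>) * exp (v * (norm \<zeta>)\<^sup>2 / 2) * exp (v * (norm \<eta>)\<^sup>2 / 2)" for \<eta>
  proof -
    have "norm (g \<eta>) powr v = norm (f (\<zeta> + \<eta>)) powr v * exp (Re (- cnj \<zeta> * \<eta>)) powr v"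
      unfolding g_def by (simp add: norm_mult powr_mult)
    also have "exp (Re (- cnj \<zeta> * \<eta>)) powr v = exp (- v * (norm (\<zeta> + \<eta>))\<^sup>2 / 2) * exp (v * (norm \<zeta>)\<^sup>2 / 2) * exp (v * (norm \<eta>)\<^sup>2 / 2)"
      unfolding exp_powr exp_add[symmetric] norm_add_sq by (simp add: field_simps)
    finally show ?thesis unfolding W_def by (simp add: mult.assoc)
  qed
  have g0: "g 0 = f \<zeta>" by (simp add: g_def)
  have "ennreal (norm (f \<zeta>) powr v) \<le> ennreal K * (\<integral>\<^sup>+z. ennreal (norm (g z) powr v) * indicator B z \<partial>lborel)"
    using local_Lnu[OF g v] unfolding g0 K_def B_def .
  also have "\<dots> \<le> ennreal K * (\<integral>\<^sup>+z. ennreal (exp (v * (norm \<zeta>)\<^sup>2 / 2) * exp (4 * v)) * (ennreal (W (\<zeta> + z)) * indicator B z) \<partial>lborel)"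
  proof (intro mult_left_mono nn_integral_mono)
    fix z :: complex
    show "ennreal (norm (g z) powr v) * indicator B z \<le> ennreal (exp (v * (norm \<zeta>)\<^sup>2 / 2) * exp (4 * v)) * (ennreal (W (\<zeta> + z)) * indicator B z)"
    proof (cases "z \<in> B")
      case True
      have "exp (v * (norm z)\<^sup>2 / 2) \<le> exp (4 * v)"
        using box4_norm[of z] True v unfolding B_def by (auto intro!: mult_left_mono simp: mult.commute)
      then have "norm (g z) powr v \<le> W (\<zeta> + z) * exp (v * (norm \<zeta>)\<^sup>2 / 2) * exp (4 * v)"
        unfolding gW by (intro mult_left_mono) (auto simp: W_def)
      then show ?thesis using True
        by (simp add: ennreal_mult[symmetric] W_def ennreal_leI mult_ac)
    qed simp
  qed simp
  also have "\<dots> = ennreal K * ennreal (exp (v * (norm \<zeta>)\<^sup>2 / 2) * exp (4 * v)) * (\<integral>\<^sup>+z. ennreal (W (\<zeta> + z)) * indicator B z \<partial>lborel)"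
  proof -
    have [measurable]: "B \<in> sets borel" unfolding B_def by simp
    have "(\<lambda>z. ennreal (W (\<zeta> + z)) * indicator B z) \<in> borel_measurable borel"
      unfolding W_def by measurable
    then show ?thesis by (subst nn_integral_cmult) (auto simp: mult.assoc)
  qed
  finally have main: "ennreal (norm (f \<zeta>) powr v) \<le> ennreal (K * exp (v * (norm \<zeta>)\<^sup>2 / 2) * exp (4 * v)) * (\<integral>\<^sup>+z. ennreal (W (\<zeta> + z)) * indicator B z \<partial>lborel)"
    using K by (simp add: ennreal_mult mult.assoc)
  have "ennreal (W \<zeta>) = ennreal (exp (- v * (norm \<zeta>)\<^sup>2 / 2)) * ennreal (norm (f \<zeta>) powr v)"
    unfolding W_def by (simp add: ennreal_mult mult.commute)
  also have "\<dots> \<le> ennreal (exp (- v * (norm \<zeta>)\<^sup>2 / 2)) * (ennreal (K * exp (v * (norm \<zeta>)\<^sup>2 / 2) * exp (4 * v)) * (\<integral>\<^sup>+z. ennreal (W (\<zeta> + z)) * indicator B z \<partial>lborel))"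
    by (intro mult_left_mono main) auto
  also have "\<dots> = ennreal (exp (- v * (norm \<zeta>)\<^sup>2 / 2) * (K * exp (v * (norm \<zeta>)\<^sup>2 / 2) * exp (4 * v))) * (\<integral>\<^sup>+z. ennreal (W (\<zeta> + z)) * indicator B z \<partial>lborel)"
    using K by (simp add: ennreal_mult mult.assoc)
  also have "exp (- v * (norm \<zeta>)\<^sup>2 / 2) * (K * exp (v * (norm \<zeta>)\<^sup>2 / 2) * exp (4 * v)) = K * exp (4 * v)"
    by (simp add: mult_ac exp_add[symmetric])
  finally show ?thesis unfolding W_def K_def B_def .
qed

definition hq :: "complex \<Rightarrow> complex \<Rightarrow> complex \<Rightarrow> real" where
  "hq a r u = (1 - (norm a)\<^sup>2) / 2 * (norm u)\<^sup>2 - Re (r * u\<^sup>2)"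

definition ee :: "complex \<Rightarrow> complex \<Rightarrow> complex \<Rightarrow> complex \<Rightarrow> real" where
  "ee a r l u = Re (l * u) - hq a r u"

lemma hq_lower: "norm r \<le> (1 - (norm a)\<^sup>2) / 2 \<Longrightarrow> norm r * (norm u)\<^sup>2 - Re (r * u\<^sup>2) \<le> hq a r u"
proof -
  assume "norm r \<le> (1 - (norm a)\<^sup>2) / 2"
  then have "norm r * (norm u)\<^sup>2 \<le> (1 - (norm a)\<^sup>2) / 2 * (norm u)\<^sup>2" by (intro mult_right_mono) auto
  then show ?thesis unfolding hq_def by linarith
qed

lemma Re_le_norm_mult_sq: "Re (r * u\<^sup>2) \<le> norm r * (norm u)\<^sup>2"
  using complex_Re_le_cmod[of "r * u\<^sup>2"] by (simp add: norm_mult norm_power)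

lemma hq_nonneg: "norm r \<le> (1 - (norm a)\<^sup>2) / 2 \<Longrightarrow> 0 \<le> hq a r u"
  using hq_lower[of r a u] Re_le_norm_mult_sq[of r u] by linarith

lemma hq_upper: "norm a < 1 \<Longrightarrow> norm r \<le> (1 - (norm a)\<^sup>2) / 2 \<Longrightarrow> hq a r u \<le> (norm u)\<^sup>2"
proof -
  assume a: "norm a < 1" and r: "norm r \<le> (1 - (norm a)\<^sup>2) / 2"
  have "- Re (r * u\<^sup>2) \<le> norm r * (norm u)\<^sup>2"
    using complex_Re_le_cmod[of "- (r * u\<^sup>2)"] by (simp add: norm_mult norm_power)
  also have "\<dots> \<le> (1 - (norm a)\<^sup>2) / 2 * (norm u)\<^sup>2" using r by (intro mult_right_mono) auto
  finally have "hq a r u \<le> (1 - (norm a)\<^sup>2) * (norm u)\<^sup>2" unfolding hq_def by linarith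
  also have "\<dots> \<le> (norm u)\<^sup>2" using a by (intro mult_left_le_one_le) (auto intro: power_le_one)
  finally show ?thesis .
qed

lemma hq_scale: "hq a r (complex_of_real s * u) = s\<^sup>2 * hq a r u"
  unfolding hq_def by (simp add: norm_mult power_mult_distrib algebra_simps)

lemma ee_scale: "ee a r l (complex_of_real s * u) = s * Re (l * u) - s\<^sup>2 * hq a r u"
  unfolding ee_def hq_scale by (simp add: algebra_simps)

lemma lin_bound:
  assumes M: "\<And>u. ee a r l u \<le> M" and h: "\<And>u. 0 \<le> hq a r u"
  shows "(Re (l * u))\<^sup>2 \<le> 4 * M * hq a r u"
proof (cases "hq a r u = 0")
  case True
  have "Re (l * u) = 0"
  proof (rule ccontr)
    assume L: "Re (l * u) \<noteq> 0"
    define s where "s = (\<bar>M\<bar> + 1) / Re (l * u)"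
    have "ee a r l (complex_of_real s * u) = \<bar>M\<bar> + 1" using L True unfolding ee_scale s_def by simp
    with M[of "complex_of_real s * u"] show False by linarith
  qed
  then show ?thesis using True by simp
next
  case False
  then have hp: "hq a r u > 0" using h[of u] by simp
  define s where "s = Re (l * u) / (2 * hq a r u)"
  have "ee a r l (complex_of_real s * u) = (Re (l * u))\<^sup>2 / (4 * hq a r u)"
    unfolding ee_scale s_def using hp by (simp add: power2_eq_square field_simps)
  with M[of "complex_of_real s * u"] have "(Re (l * u))\<^sup>2 / (4 * hq a r u) \<le> M" by simp
  then show ?thesis using hp by (simp add: field_simps)
qed

lemma ee_sqrt_bound:
  assumes M: "\<And>u. ee a r l u \<le> M" and h: "\<And>u. 0 \<le> hq a r u"
  shows "ee a r l u \<le> 2 * sqrt M * sqrt (hq a r u) - hq a r u"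
proof -
  have M0: "0 \<le> M" using M[of 0] by (simp add: ee_def hq_def)
  have "\<bar>Re (l * u)\<bar> = sqrt ((Re (l * u))\<^sup>2)" by simp
  also have "\<dots> \<le> sqrt (4 * M * hq a r u)" using lin_bound[OF M h] by (rule real_sqrt_le_mono)
  also have "\<dots> = 2 * sqrt M * sqrt (hq a r u)" by (simp add: real_sqrt_mult)
  finally show ?thesis unfolding ee_def by linarith
qed

lemma ee_decay:
  assumes M: "\<And>u. ee a r l u \<le> M" and r: "norm r \<le> (1 - (norm a)\<^sup>2) / 2" and r0: "r \<noteq> 0"
  shows "\<exists>\<sigma>. norm \<sigma> = 1 \<and> (\<forall>u. ee a r l u \<le> 2 * M - norm r * (Im (\<sigma> * u))\<^sup>2)"
proof -
  have h: "\<And>u. 0 \<le> hq a r u" using hq_nonneg[OF r] .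
  have M0: "0 \<le> M" using M[of 0] by (simp add: ee_def hq_def)
  define \<sigma> where "\<sigma> = csqrt (r / complex_of_real (norm r))"
  have \<sigma>1: "norm \<sigma> = 1" using r0 by (simp add: \<sigma>_def norm_divide)
  have rs: "r = complex_of_real (norm r) * \<sigma>\<^sup>2" using r0 by (simp add: \<sigma>_def)
  have key: "2 * norm r * (Im (\<sigma> * u))\<^sup>2 \<le> hq a r u" for u
  proof -
    have "norm r * (norm u)\<^sup>2 - Re (r * u\<^sup>2) = norm r * ((norm (\<sigma> * u))\<^sup>2 - Re ((\<sigma> * u)\<^sup>2))"
      by (subst (2) rs) (simp add: norm_mult \<sigma>1 power_mult_distrib algebra_simps)
    also have "(norm (\<sigma> * u))\<^sup>2 - Re ((\<sigma> * u)\<^sup>2) = 2 * (Im (\<sigma> * u))\<^sup>2"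
      unfolding cmod_power2 by (simp add: power2_eq_square)
    finally show ?thesis using hq_lower[OF r, of u] by simp
  qed
  have "ee a r l u \<le> 2 * M - norm r * (Im (\<sigma> * u))\<^sup>2" for u
  proof -
    have "2 * sqrt M * sqrt (hq a r u) \<le> hq a r u / 2 + 2 * M"
    proof -
      have "0 \<le> (sqrt (hq a r u) / sqrt 2 - sqrt 2 * sqrt M)\<^sup>2" by simp
      also have "\<dots> = hq a r u / 2 - 2 * sqrt M * sqrt (hq a r u) + 2 * M"
        using h[of u] M0 by (simp add: power2_diff power_divide power_mult_distrib)
      finally show ?thesis by linarith
    qed
    then show ?thesis using ee_sqrt_bound[OF M h, of u] key[of u] by linarith
  qed
  then show ?thesis using \<sigma>1 by blast
qed

lemma quad_bound: "(c::real) > 0 \<Longrightarrow> 2 * A * x - c * x\<^sup>2 \<le> A\<^sup>2 / c"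
proof -
  assume c: "c > 0"
  have "0 \<le> (c * x - A)\<^sup>2" by simp
  then have "2 * A * x * c - c * x\<^sup>2 * c \<le> A\<^sup>2" by (simp add: power2_eq_square algebra_simps)
  then show ?thesis using c by (simp add: field_simps)
qed

lemma norm_one_plus_sq_less:
  assumes "Im a \<noteq> 0"
  shows "norm (1 + a\<^sup>2) < 1 + (norm a)\<^sup>2"
proof -
  have "(norm (1 + a\<^sup>2))\<^sup>2 = (1 + (Re a)\<^sup>2 - (Im a)\<^sup>2)\<^sup>2 + (2 * Re a * Im a)\<^sup>2"
    unfolding cmod_power2 by (simp add: power2_eq_square algebra_simps)
  also have "\<dots> = (1 + (norm a)\<^sup>2)\<^sup>2 - 4 * (Im a)\<^sup>2"
    unfolding cmod_power2 by (simp add: power2_eq_square algebra_simps)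
  also have "\<dots> < (1 + (norm a)\<^sup>2)\<^sup>2" using assms by simp
  finally show ?thesis
    by (rule power2_less_imp_less) simp
qed

lemma geom_le: "0 \<le> (x::real) \<Longrightarrow> x < 1 \<Longrightarrow> (\<Sum>k<n. x ^ k) \<le> 1 / (1 - x)"
proof -
  assume x: "0 \<le> x" "x < 1"
  have "(\<Sum>k<n. x ^ k) = (1 - x ^ n) / (1 - x)"
    using x by (subst sum_gp_strict) auto
  also have "\<dots> \<le> 1 / (1 - x)" using x by (intro divide_right_mono) auto
  finally show ?thesis .
qed

lemma ee_sum_bound:
  assumes M: "\<And>u. ee a r l u \<le> M" and a: "0 < norm a" "norm a < 1"
    and r: "0 < norm r" "norm r \<le> (1 - (norm a)\<^sup>2) / 2"
  shows "\<exists>B. \<forall>n u. (\<Sum>k<n. ee a r l (a ^ k * u)) \<le> B"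
proof -
  have h: "\<And>u. 0 \<le> hq a r u" using hq_nonneg[OF r(2)] .
  have M0: "0 \<le> M" using M[of 0] by (simp add: ee_def hq_def)
  define A where "A = sqrt M / (1 - norm a)"
  have A0: "0 \<le> A" using a M0 by (simp add: A_def)
  have gen: "(\<Sum>k<n. ee a r l (a ^ k * u)) \<le> 2 * sqrt M * (\<Sum>k<n. sqrt (hq a r (a ^ k * u))) - (\<Sum>k<n. hq a r (a ^ k * u))" for n u
  proof -
    have "(\<Sum>k<n. ee a r l (a ^ k * u)) \<le> (\<Sum>k<n. 2 * sqrt M * sqrt (hq a r (a ^ k * u)) - hq a r (a ^ k * u))"
      by (intro sum_mono ee_sqrt_bound[OF M h])
    also have "\<dots> = 2 * sqrt M * (\<Sum>k<n. sqrt (hq a r (a ^ k * u))) - (\<Sum>k<n. hq a r (a ^ k * u))"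
      by (simp add: sum_subtractf sum_distrib_left)
    finally show ?thesis .
  qed
  have sq_le: "(\<Sum>k<n. sqrt (hq a r (a ^ k * u))) \<le> norm u / (1 - norm a)" for n u
  proof -
    have "(\<Sum>k<n. sqrt (hq a r (a ^ k * u))) \<le> (\<Sum>k<n. norm u * norm a ^ k)"
    proof (intro sum_mono)
      fix k
      have "sqrt (hq a r (a ^ k * u)) \<le> sqrt ((norm (a ^ k * u))\<^sup>2)"
        by (intro real_sqrt_le_mono hq_upper a r)
      then show "sqrt (hq a r (a ^ k * u)) \<le> norm u * norm a ^ k" by (simp add: norm_mult norm_power mult.commute)
    qed
    also have "\<dots> = norm u * (\<Sum>k<n. norm a ^ k)" by (simp add: sum_distrib_left)
    also have "\<dots> \<le> norm u * (1 / (1 - norm a))" using a by (intro mult_left_mono geom_le) auto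
    finally show ?thesis by simp
  qed
  show ?thesis
  proof (cases "Im a = 0")
    case True
    define \<alpha> where "\<alpha> = Re a"
    have a\<alpha>: "a = complex_of_real \<alpha>" using True by (simp add: \<alpha>_def complex_eq_iff)
    have hk: "hq a r (a ^ k * u) = (\<alpha> ^ k)\<^sup>2 * hq a r u" for k u
      unfolding a\<alpha> of_real_power[symmetric] hq_scale ..
    have na: "norm a = \<bar>\<alpha>\<bar>" by (simp add: a\<alpha>)
    have "(\<Sum>k<n. ee a r l (a ^ k * u)) \<le> max 0 (A\<^sup>2)" for n u
    proof (cases n)
      case 0 then show ?thesis by simp
    next
      case (Suc m)
      define x where "x = sqrt (hq a r u)"
      have x0: "0 \<le> x" and xx: "x\<^sup>2 = hq a r u" using h[of u] by (auto simp: x_def)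
      have "(\<Sum>k<n. sqrt (hq a r (a ^ k * u))) = (\<Sum>k<n. \<bar>\<alpha>\<bar> ^ k) * x"
        by (simp add: hk real_sqrt_mult power_abs x_def sum_distrib_right)
      also have "\<dots> \<le> (1 / (1 - norm a)) * x" unfolding na using a na x0
        by (intro mult_right_mono geom_le) auto
      finally have s1: "(\<Sum>k<n. sqrt (hq a r (a ^ k * u))) \<le> x / (1 - norm a)" by simp
      have "hq a r u \<le> (\<Sum>k<n. hq a r (a ^ k * u))"
        unfolding Suc lessThan_Suc_eq_insert_0 using h
        by (simp add: sum.reindex sum_nonneg)
      then have "(\<Sum>k<n. ee a r l (a ^ k * u)) \<le> 2 * sqrt M * (x / (1 - norm a)) - x\<^sup>2"
        using gen[where n=n and u=u] s1 xx mult_left_mono[OF s1, of "2 * sqrt M"] M0 by simp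
      also have "\<dots> = 2 * A * x - 1 * x\<^sup>2" by (simp add: A_def)
      also have "\<dots> \<le> A\<^sup>2 / 1" by (rule quad_bound) simp
      finally show ?thesis by simp
    qed
    then show ?thesis by blast
  next
    case False
    define c where "c = norm r * ((1 + (norm a)\<^sup>2) - norm (1 + a\<^sup>2))"
    have c0: "c > 0" using norm_one_plus_sq_less[OF False] r by (simp add: c_def)
    have two: "c * (norm u)\<^sup>2 \<le> hq a r u + hq a r (a * u)" for u
    proof -
      have "Re (r * (1 + a\<^sup>2) * u\<^sup>2) \<le> norm r * norm (1 + a\<^sup>2) * (norm u)\<^sup>2"
        using complex_Re_le_cmod[of "r * (1 + a\<^sup>2) * u\<^sup>2"] by (simp add: norm_mult norm_power)
      moreover have "Re (r * (1 + a\<^sup>2) * u\<^sup>2) = Re (r * u\<^sup>2) + Re (r * (a * u)\<^sup>2)"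
        by (simp add: algebra_simps power_mult_distrib)
      moreover have "(norm (a * u))\<^sup>2 = (norm a)\<^sup>2 * (norm u)\<^sup>2" by (simp add: norm_mult power_mult_distrib)
      ultimately show ?thesis
        using hq_lower[OF r(2), of u] hq_lower[OF r(2), of "a * u"] unfolding c_def
        by (simp add: algebra_simps)
    qed
    have "(\<Sum>k<n. ee a r l (a ^ k * u)) \<le> max M (A\<^sup>2 / c)" for n u
    proof (cases "n \<ge> 2")
      case True
      have "hq a r u + hq a r (a * u) \<le> (\<Sum>k<n. hq a r (a ^ k * u))"
      proof -
        have "{0, 1} \<subseteq> {..<n}" using True by auto
        then have "(\<Sum>k\<in>{0,1}. hq a r (a ^ k * u)) \<le> (\<Sum>k<n. hq a r (a ^ k * u))"
          by (intro sum_mono2) (auto simp: h)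
        then show ?thesis by simp
      qed
      then have "(\<Sum>k<n. ee a r l (a ^ k * u)) \<le> 2 * sqrt M * (norm u / (1 - norm a)) - c * (norm u)\<^sup>2"
        using gen[where n=n and u=u] two[of u] mult_left_mono[OF sq_le[where n=n and u=u], of "2 * sqrt M"] M0 by simp
      also have "\<dots> = 2 * A * norm u - c * (norm u)\<^sup>2" by (simp add: A_def)
      also have "\<dots> \<le> A\<^sup>2 / c" by (rule quad_bound[OF c0])
      finally show ?thesis by simp
    next
      case False
      then have "n = 0 \<or> n = 1" by auto
      then show ?thesis using M[of u] M0 by auto
    qed
    then show ?thesis by blast
  qed
qed

lemma gauss2_finite:
  assumes k: "k > 0"
  shows "(\<integral>\<^sup>+z. ennreal (exp (- k * (norm (z::complex))\<^sup>2)) \<partial>lborel) < \<infinity>"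
proof -
  have "(\<integral>\<^sup>+z. ennreal (exp (- k * (norm (z::complex))\<^sup>2)) \<partial>lborel)
     = (\<integral>\<^sup>+x. \<integral>\<^sup>+y. ennreal (exp (- k * x\<^sup>2)) * ennreal (exp (- k * y\<^sup>2)) \<partial>lborel \<partial>lborel)"
    by (subst nn_integral_complex)
       (auto simp: cmod_power2 ennreal_mult[symmetric] exp_add[symmetric] algebra_simps intro!: nn_integral_cong)
  also have "\<dots> = (\<integral>\<^sup>+x. ennreal (exp (- k * x\<^sup>2)) * (\<integral>\<^sup>+y. ennreal (exp (- k * y\<^sup>2)) \<partial>lborel) \<partial>lborel)"
    by (subst nn_integral_cmult) auto
  also have "\<dots> = (\<integral>\<^sup>+y. ennreal (exp (- k * y\<^sup>2)) \<partial>lborel) * (\<integral>\<^sup>+x. ennreal (exp (- k * x\<^sup>2)) \<partial>lborel)"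
    by (subst nn_integral_multc) auto
  finally show ?thesis using gauss_nn_integral_finite[OF k] by (simp add: ennreal_mult_less_top)
qed

lemma fock_point_eval:
  fixes f :: "complex \<Rightarrow> complex" and v :: real
  assumes f: "f holomorphic_on UNIV" and v: "1 \<le> v"
  shows "ennreal (norm (f \<zeta>) powr v * exp (- v * (norm \<zeta>)\<^sup>2 / 2)) \<le>
    ennreal ((2/pi) * (32/pi) powr (v - 1) * exp (4 * v)) * fock_integral v f"
proof -
  have [measurable]: "f \<in> borel_measurable borel"
    using f holomorphic_on_imp_continuous_on borel_measurable_continuous_onI by blast
  have "(\<integral>\<^sup>+\<eta>. ennreal (norm (f (\<zeta> + \<eta>)) powr v * exp (- v * (norm (\<zeta> + \<eta>))\<^sup>2 / 2)) * indicator (cbox (Complex (-2) (-2)) (Complex 2 2)) \<eta> \<partial>lborel)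
     \<le> (\<integral>\<^sup>+\<eta>. ennreal (norm (f (\<eta> + \<zeta>)) powr v * exp (- v * (norm (\<eta> + \<zeta>))\<^sup>2 / 2)) \<partial>lborel)"
    by (intro nn_integral_mono) (auto simp: indicator_def add.commute)
  also have "\<dots> = fock_integral v f"
    unfolding fock_integral_def
    by (rule nn_integral_complex_translate[where f = "\<lambda>z. ennreal (norm (f z) powr v * exp (- v * (norm z)\<^sup>2 / 2))"]) measurable
  finally show ?thesis
    using fock_local[OF f v, of \<zeta>] by (meson mult_left_mono order_trans zero_le)
qed

locale wcs =
  fixes v :: real and a b p q r :: complex
  assumes v: "1 \<le> v" and a0: "0 < norm a" and a1: "norm a < 1"
    and r0: "0 < norm r" and r1: "norm r \<le> (1 - (norm a)\<^sup>2) / 2"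
begin

definition "phi = (\<lambda>z. a * z + b)"
definition "w = (\<lambda>z. exp (p + q * z + r * z\<^sup>2))"
definition "T = wcomp w phi"
definition "z0 = b / (1 - a)"
definition "c = Re (p + q * z0 + r * z0\<^sup>2)"
definition "l = q + 2 * r * z0 + cnj z0 * (a - 1)"

lemma a_ne1: "a \<noteq> 1" using a1 by auto

lemma phi_z0: "a * z0 + b = z0"
  using a_ne1 by (simp add: z0_def field_simps)

lemma phi_iter: "(phi ^^ k) z = z0 + a ^ k * (z - z0)"
proof (induction k)
  case 0 then show ?case by simp
next
  case (Suc k)
  have "(phi ^^ Suc k) z = phi ((phi ^^ k) z)" by simp
  also have "\<dots> = a * (z0 + a ^ k * (z - z0)) + b" by (simp only: Suc) (simp add: phi_def)
  also have "\<dots> = (a * z0 + b) + a ^ Suc k * (z - z0)" by (simp add: algebra_simps)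
  finally show ?case by (simp add: phi_z0)
qed

lemma T_apply: "T g = (\<lambda>z. w z * g (phi z))"
  by (simp add: T_def wcomp_def)

lemma T_iter: "(T ^^ n) f = (\<lambda>z. (\<Prod>k<n. w ((phi ^^ k) z)) * f ((phi ^^ n) z))"
proof (induction n arbitrary: f)
  case 0 then show ?case by simp
next
  case (Suc n)
  have "(T ^^ Suc n) f = T ((T ^^ n) f)" by simp
  also have "\<dots> = (\<lambda>z. w z * ((\<Prod>k<n. w ((phi ^^ k) (phi z))) * f ((phi ^^ n) (phi z))))"
    by (simp add: T_apply Suc)
  also have "\<dots> = (\<lambda>z. (\<Prod>k<Suc n. w ((phi ^^ k) z)) * f ((phi ^^ Suc n) z))"
  proof
    fix z
    have e: "(phi ^^ k) (phi z) = (phi ^^ Suc k) z" for k by (simp add: funpow_Suc_right del: funpow.simps)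
    show "w z * ((\<Prod>k<n. w ((phi ^^ k) (phi z))) * f ((phi ^^ n) (phi z))) = (\<Prod>k<Suc n. w ((phi ^^ k) z)) * f ((phi ^^ Suc n) z)"
      unfolding e prod.lessThan_Suc_shift by simp
  qed
  finally show ?case .
qed

lemma key_identity:
  "norm (w \<zeta>) * exp (((norm (phi \<zeta>))\<^sup>2 - (norm \<zeta>)\<^sup>2) / 2) = exp (c + ee a r l (\<zeta> - z0))"
proof -
  define u where "u = \<zeta> - z0"
  have z: "\<zeta> = z0 + u" by (simp add: u_def)
  have ph: "phi (z0 + u) = z0 + a * u" unfolding phi_def using phi_z0 by (simp add: algebra_simps)
  have "norm (w \<zeta>) = exp (Re (p + q * \<zeta> + r * \<zeta>\<^sup>2))" by (simp add: w_def)
  moreover have "Re (p + q * \<zeta> + r * \<zeta>\<^sup>2) = c + Re ((q + 2 * r * z0) * u) + Re (r * u\<^sup>2)"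
    unfolding z c_def by (simp add: power2_eq_square algebra_simps)
  moreover have "((norm (phi \<zeta>))\<^sup>2 - (norm \<zeta>)\<^sup>2) / 2 = Re (cnj z0 * (a - 1) * u) - (1 - (norm a)\<^sup>2) / 2 * (norm u)\<^sup>2"
    unfolding z ph norm_add_sq by (simp add: norm_mult power_mult_distrib field_simps)
  ultimately have "norm (w \<zeta>) * exp (((norm (phi \<zeta>))\<^sup>2 - (norm \<zeta>)\<^sup>2) / 2)
     = exp (c + (Re (l * u) - ((1 - (norm a)\<^sup>2) / 2 * (norm u)\<^sup>2 - Re (r * u\<^sup>2))))"
    by (simp add: exp_add[symmetric] l_def algebra_simps)
  then show ?thesis by (simp add: ee_def hq_def u_def)
qed

lemma prod_weight:
  "(\<Prod>k<n. norm (w ((phi ^^ k) z))) * exp (((norm ((phi ^^ n) z))\<^sup>2 - (norm z)\<^sup>2) / 2)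
   = exp (n * c + (\<Sum>k<n. ee a r l (a ^ k * (z - z0))))"
proof (induction n)
  case 0 then show ?case by simp
next
  case (Suc n)
  define \<zeta> where "\<zeta> = (phi ^^ n) z"
  have ps: "(phi ^^ Suc n) z = phi \<zeta>" by (simp add: \<zeta>_def)
  have zd: "\<zeta> - z0 = a ^ n * (z - z0)" by (simp add: \<zeta>_def phi_iter)
  have "(\<Prod>k<Suc n. norm (w ((phi ^^ k) z))) * exp (((norm ((phi ^^ Suc n) z))\<^sup>2 - (norm z)\<^sup>2) / 2)
     = ((\<Prod>k<n. norm (w ((phi ^^ k) z))) * exp (((norm \<zeta>)\<^sup>2 - (norm z)\<^sup>2) / 2))
       * (norm (w \<zeta>) * exp (((norm (phi \<zeta>))\<^sup>2 - (norm \<zeta>)\<^sup>2) / 2))"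
  proof -
    have ex: "exp (((norm (phi \<zeta>))\<^sup>2 - (norm z)\<^sup>2) / 2) = exp (((norm \<zeta>)\<^sup>2 - (norm z)\<^sup>2) / 2) * exp (((norm (phi \<zeta>))\<^sup>2 - (norm \<zeta>)\<^sup>2) / 2)"
      by (simp add: exp_add[symmetric] diff_divide_distrib)
    show ?thesis unfolding ps ex by (simp add: \<zeta>_def mult_ac)
  qed
  also have "\<dots> = exp (n * c + (\<Sum>k<n. ee a r l (a ^ k * (z - z0)))) * exp (c + ee a r l (a ^ n * (z - z0)))"
    unfolding key_identity zd[symmetric] by (simp add: Suc \<zeta>_def)
  also have "\<dots> = exp (Suc n * c + (\<Sum>k<Suc n. ee a r l (a ^ k * (z - z0))))"
    by (simp add: exp_add[symmetric] algebra_simps)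
  finally show ?case .
qed

lemma integrand_iter:
  "norm ((T ^^ n) f z) powr v * exp (- v * (norm z)\<^sup>2 / 2)
   = exp (v * (n * c + (\<Sum>k<n. ee a r l (a ^ k * (z - z0)))))
     * (norm (f ((phi ^^ n) z)) powr v * exp (- v * (norm ((phi ^^ n) z))\<^sup>2 / 2))"
proof -
  define P where "P = (\<Prod>k<n. norm (w ((phi ^^ k) z)))"
  define S where "S = n * c + (\<Sum>k<n. ee a r l (a ^ k * (z - z0)))"
  define A0 where "A0 = (norm z)\<^sup>2"
  define An where "An = (norm ((phi ^^ n) z))\<^sup>2"
  have "P * exp ((An - A0) / 2) = exp S" unfolding P_def S_def An_def A0_def by (rule prod_weight)
  then have "P = exp S / exp ((An - A0) / 2)" by (simp add: eq_divide_eq)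
  then have P: "P = exp (S - (An - A0) / 2)" by (simp add: exp_diff)
  have "norm ((T ^^ n) f z) = P * norm (f ((phi ^^ n) z))"
    by (simp add: T_iter P_def norm_mult prod_norm)
  then have "norm ((T ^^ n) f z) powr v = P powr v * norm (f ((phi ^^ n) z)) powr v"
    by (simp add: powr_mult P_def prod_nonneg)
  also have "P powr v = exp (v * S) * exp (- v * An / 2) * exp (v * A0 / 2)"
    unfolding P exp_powr by (simp add: exp_add[symmetric] algebra_simps diff_divide_distrib add_divide_distrib)
  finally show ?thesis unfolding S_def[symmetric] A0_def[symmetric] An_def[symmetric]
    by (simp add: mult_ac exp_add[symmetric] exp_minus_inverse)
qed

lemma c_eq: "c = Re p + Re (q * b / (1 - a)) + Re (r * b\<^sup>2 / (1 - a)\<^sup>2)"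
  by (simp add: c_def z0_def power_divide)

end

lemma fock_norm_ge:
  assumes v: "0 < v" and fin: "fock_integral v g < top" and Y: "0 \<le> Y" "ennreal Y \<le> fock_integral v g"
  shows "(v / (2 * pi) * Y) powr (1 / v) \<le> fock_norm v g"
proof -
  have "Y \<le> enn2real (fock_integral v g)"
    using enn2real_mono[OF Y(2) fin] Y(1) by simp
  then show ?thesis unfolding fock_norm_def using v Y(1)
    by (intro powr_mono2) (auto intro!: mult_left_mono divide_right_mono)
qed

lemma fock_norm_le:
  assumes v: "0 < v" and Y: "0 \<le> Y" "fock_integral v g \<le> ennreal Y"
  shows "fock_norm v g \<le> (v / (2 * pi) * Y) powr (1 / v)"
proof -
  have fin: "fock_integral v g < top" using Y(2) by (meson ennreal_less_top le_less_trans)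
  have "enn2real (fock_integral v g) \<le> Y"
    using enn2real_mono[OF Y(2)] Y(1) by (simp add: less_top[symmetric])
  then show ?thesis unfolding fock_norm_def using v
    by (intro powr_mono2) (auto intro!: mult_left_mono divide_right_mono)
qed

lemma fock_norm_nonneg: "0 \<le> fock_norm v g"
  by (simp add: fock_norm_def)

lemma one_in_fock:
  assumes v: "0 < v"
  shows "(\<lambda>_. 1) \<in> fock_space v"
proof -
  have "fock_integral v (\<lambda>_. 1) = (\<integral>\<^sup>+z. ennreal (exp (- (v/2) * (norm (z::complex))\<^sup>2)) \<partial>lborel)"
    unfolding fock_integral_def by simp
  also have "\<dots> < \<infinity>" using v by (intro gauss2_finite) simp
  finally show ?thesis unfolding fock_space_def by auto
qed

lemma iter_in_fock:
  assumes "bounded_on_fock v T" "f \<in> fock_space v"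
  shows "(T ^^ n) f \<in> fock_space v"
  using assms by (induction n) (auto simp: bounded_on_fock_def)

context wcs
begin

lemma ee_lower:
  assumes "norm t \<le> 1"
  shows "- (norm l + 1) * norm t \<le> ee a r l t"
proof -
  have "- (norm l * norm t) \<le> Re (l * t)"
    using complex_Re_le_cmod[of "- (l * t)"] by (simp add: norm_mult)
  moreover have "hq a r t \<le> (norm t)\<^sup>2" using hq_upper[OF a1 r1] .
  moreover have "(norm t)\<^sup>2 \<le> norm t" using assms by (simp add: power2_eq_square mult_left_le_one_le)
  ultimately show ?thesis unfolding ee_def by (simp add: algebra_simps)
qed

lemma sum_lower:
  assumes "norm u \<le> 1"
  shows "- (norm l + 1) / (1 - norm a) \<le> (\<Sum>k<n. ee a r l (a ^ k * u))"
proof -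
  have "(\<Sum>k<n. - (norm l + 1) * norm a ^ k) \<le> (\<Sum>k<n. ee a r l (a ^ k * u))"
  proof (intro sum_mono)
    fix k
    have nk: "norm (a ^ k * u) \<le> norm a ^ k" using assms by (simp add: norm_mult norm_power mult_left_le)
    also have "\<dots> \<le> 1" using a1 by (simp add: power_le_one)
    finally have "- (norm l + 1) * norm (a ^ k * u) \<le> ee a r l (a ^ k * u)" by (rule ee_lower)
    moreover have "- (norm l + 1) * norm a ^ k \<le> - (norm l + 1) * norm (a ^ k * u)"
      using nk norm_ge_zero[of l] by (intro mult_left_mono_neg) linarith+
    ultimately show "- (norm l + 1) * norm a ^ k \<le> ee a r l (a ^ k * u)" by linarith
  qed
  moreover have "- (norm l + 1) / (1 - norm a) \<le> (\<Sum>k<n. - (norm l + 1) * norm a ^ k)"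
  proof -
    have "(\<Sum>k<n. norm a ^ k) \<le> 1 / (1 - norm a)" using geom_le a1 by simp
    then have "(norm l + 1) * (\<Sum>k<n. norm a ^ k) \<le> (norm l + 1) * (1 / (1 - norm a))"
      by (intro mult_left_mono) auto
    moreover have "(\<Sum>k<n. - (norm l + 1) * norm a ^ k) = - (norm l + 1) * (\<Sum>k<n. norm a ^ k)"
      by (rule sum_distrib_left[symmetric])
    moreover have "- (norm l + 1) / (1 - norm a) = - ((norm l + 1) * (1 / (1 - norm a)))" by (simp add: minus_divide_left)
    ultimately show ?thesis by linarith
  qed
  ultimately show ?thesis by linarith
qed

lemma part1:
  assumes bd: "bounded_on_fock v T" and cpos: "c > 0"
  shows "\<not> power_bounded_on_fock v T"
proof
  assume "power_bounded_on_fock v T"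
  then obtain C where C: "\<And>n f. n \<ge> 1 \<Longrightarrow> f \<in> fock_space v \<Longrightarrow> fock_norm v ((T ^^ n) f) \<le> C * fock_norm v f"
    unfolding power_bounded_on_fock_def by blast
  have v0: "v > 0" using v by simp
  define f1 where "f1 = (\<lambda>_::complex. 1::complex)"
  have f1F: "f1 \<in> fock_space v" unfolding f1_def by (rule one_in_fock[OF v0])
  define N1 where "N1 = fock_norm v f1"
  define D1 where "D1 = (norm l + 1) / (1 - norm a)"
  define R0 where "R0 = norm z0 + 1"
  define D0 where "D0 = exp (- v * D1) * exp (- v * R0\<^sup>2 / 2)"
  have D0: "D0 > 0" by (simp add: D0_def)
  define Bx where "Bx = cbox (z0 - Complex (1/2) (1/2)) (z0 + Complex (1/2) (1/2))"
  have mBx: "emeasure lborel Bx = 1"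
    unfolding Bx_def by (subst emeasure_lborel_cbox) (auto simp: Basis_complex_def)
  have Bx_near: "norm (z - z0) \<le> 1" if "z \<in> Bx" for z
  proof -
    have b: "Re z0 - 1/2 \<le> Re z" "Re z \<le> Re z0 + 1/2" "Im z0 - 1/2 \<le> Im z" "Im z \<le> Im z0 + 1/2"
      using that by (auto simp: Bx_def in_cbox_complex_iff)
    have "\<bar>Re (z - z0)\<bar> \<le> 1/2" "\<bar>Im (z - z0)\<bar> \<le> 1/2"
      using b unfolding abs_le_iff by auto
    then have "norm (z - z0) \<le> \<bar>Re (z - z0)\<bar> + \<bar>Im (z - z0)\<bar>" using cmod_le by blast
    with \<open>\<bar>Re (z - z0)\<bar> \<le> 1/2\<close> \<open>\<bar>Im (z - z0)\<bar> \<le> 1/2\<close> show ?thesis by linarith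
  qed
  have lower: "ennreal (exp (v * (n * c)) * D0) \<le> fock_integral v ((T ^^ n) f1)" for n :: nat
  proof -
    have "ennreal (exp (v * (n * c)) * D0) = (\<integral>\<^sup>+z. ennreal (exp (v * (n * c)) * D0) * indicator Bx z \<partial>lborel)"
      using mBx by (simp add: nn_integral_cmult_indicator Bx_def)
    also have "\<dots> \<le> fock_integral v ((T ^^ n) f1)"
      unfolding fock_integral_def
    proof (intro nn_integral_mono)
      fix z :: complex assume "z \<in> space lborel"
      show "ennreal (exp (v * (n * c)) * D0) * indicator Bx z \<le> ennreal (norm ((T ^^ n) f1 z) powr v * exp (- v * (norm z)\<^sup>2 / 2))"
      proof (cases "z \<in> Bx")
        case True
        have u1: "norm (z - z0) \<le> 1" using Bx_near[OF True] .
        have S: "- D1 \<le> (\<Sum>k<n. ee a r l (a ^ k * (z - z0)))" unfolding D1_def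
          using sum_lower[OF u1] by (simp add: minus_divide_left)
        have e1: "exp (v * (n * c)) * exp (- v * D1) \<le> exp (v * (n * c + (\<Sum>k<n. ee a r l (a ^ k * (z - z0)))))"
        proof -
          have "v * (n * c) + - v * D1 \<le> v * (n * c + (\<Sum>k<n. ee a r l (a ^ k * (z - z0))))"
            using mult_left_mono[OF S, of v] v0 by (simp add: algebra_simps)
          then show ?thesis by (simp add: exp_add[symmetric])
        qed
        have "norm ((phi ^^ n) z) \<le> norm z0 + norm (a ^ n * (z - z0))"
          unfolding phi_iter by (rule norm_triangle_ineq)
        also have "norm (a ^ n * (z - z0)) \<le> 1"
        proof -
          have "norm (a ^ n * (z - z0)) = norm a ^ n * norm (z - z0)" by (simp add: norm_mult norm_power)
          also have "\<dots> \<le> 1 * 1" using u1 a1 by (intro mult_mono power_le_one) auto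
          finally show ?thesis by simp
        qed
        finally have pn: "norm ((phi ^^ n) z) \<le> R0" by (simp add: R0_def)
        then have "(norm ((phi ^^ n) z))\<^sup>2 \<le> R0\<^sup>2" by (intro power_mono) auto
        then have e2: "exp (- v * R0\<^sup>2 / 2) \<le> exp (- v * (norm ((phi ^^ n) z))\<^sup>2 / 2)"
          using v0 by (simp add: mult_left_mono)
        have "exp (v * (n * c)) * D0 \<le> exp (v * (n * c + (\<Sum>k<n. ee a r l (a ^ k * (z - z0))))) * exp (- v * (norm ((phi ^^ n) z))\<^sup>2 / 2)"
        proof -
          have "exp (v * (n * c)) * D0 = (exp (v * (n * c)) * exp (- v * D1)) * exp (- v * R0\<^sup>2 / 2)"
            by (simp add: D0_def mult.assoc)
          also have "\<dots> \<le> exp (v * (n * c + (\<Sum>k<n. ee a r l (a ^ k * (z - z0))))) * exp (- v * (norm ((phi ^^ n) z))\<^sup>2 / 2)"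
            using e1 e2 by (intro mult_mono) auto
          finally show ?thesis .
        qed
        also have "\<dots> = norm ((T ^^ n) f1 z) powr v * exp (- v * (norm z)\<^sup>2 / 2)"
          unfolding integrand_iter by (simp add: f1_def)
        finally show ?thesis using True by (simp add: ennreal_leI)
      qed simp
    qed
    finally show ?thesis .
  qed
  define \<kappa> where "\<kappa> = (v * D0 / (2 * pi)) powr (1 / v)"
  have \<kappa>: "\<kappa> > 0" using D0 v0 by (simp add: \<kappa>_def)
  have bound: "exp (n * c) * \<kappa> \<le> C * N1" if n: "n \<ge> 1" for n :: nat
  proof -
    have TF: "(T ^^ n) f1 \<in> fock_space v" by (rule iter_in_fock[OF bd f1F])
    then have fin: "fock_integral v ((T ^^ n) f1) < top" by (simp add: fock_space_def)
    have "(v / (2 * pi) * (exp (v * (n * c)) * D0)) powr (1 / v) \<le> fock_norm v ((T ^^ n) f1)"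
      using D0 by (intro fock_norm_ge[OF v0 fin _ lower]) auto
    also have "\<dots> \<le> C * N1" unfolding N1_def by (rule C[OF n f1F])
    finally have *: "(v / (2 * pi) * (exp (v * (n * c)) * D0)) powr (1 / v) \<le> C * N1" .
    have "(v / (2 * pi) * (exp (v * (n * c)) * D0)) powr (1 / v) = exp (v * (n * c)) powr (1 / v) * \<kappa>"
      unfolding \<kappa>_def using D0 v0 by (simp add: powr_mult[symmetric] mult_ac)
    also have "exp (v * (n * c)) powr (1 / v) = exp (n * c)" unfolding exp_powr using v0 by simp
    finally show ?thesis using * by simp
  qed
  obtain n :: nat where n: "n \<ge> 1" "real n > C * N1 / (\<kappa> * c)"
  proof -
    obtain m :: nat where "real m > C * N1 / (\<kappa> * c)" using reals_Archimedean2 by blast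
    then show ?thesis by (intro that[of "m + 1"]) auto
  qed
  have "C * N1 < n * c * \<kappa>" using n(2) \<kappa> cpos by (simp add: field_simps)
  also have "n * c * \<kappa> \<le> exp (n * c) * \<kappa>"
    using \<kappa> by (intro mult_right_mono) (auto intro: order_trans[OF _ exp_ge_add_one_self] simp: add.commute)
  also have "\<dots> \<le> C * N1" using bound[OF n(1)] .
  finally show False by simp
qed

end

lemma fock_integral_norm:
  assumes g: "g \<in> fock_space v" and v: "0 < v"
  shows "fock_integral v g = ennreal (2 * pi / v * fock_norm v g powr v)"
proof -
  have fin: "fock_integral v g < top" using g by (simp add: fock_space_def)
  then obtain X where X: "fock_integral v g = ennreal X" "0 \<le> X"
    by (cases "fock_integral v g") auto
  have "fock_norm v g powr v = v / (2 * pi) * X"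
    unfolding fock_norm_def X(1) using X(2) v by (simp add: powr_powr)
  then show ?thesis using X v by simp
qed

lemma kernel_fock:
  assumes v: "0 < v"
  defines "I0 \<equiv> (\<integral>\<^sup>+z. ennreal (exp (- v * (norm (z::complex))\<^sup>2 / 2)) \<partial>lborel)"
  shows "fock_integral v (\<lambda>z. exp (cnj \<xi> * z)) = ennreal (exp (v * (norm \<xi>)\<^sup>2 / 2)) * I0"
    and "I0 < top"
    and "(\<lambda>z. exp (cnj \<xi> * z)) \<in> fock_space v"
proof -
  have pt: "norm (exp (cnj \<xi> * z)) powr v * exp (- v * (norm z)\<^sup>2 / 2) = exp (v * (norm \<xi>)\<^sup>2 / 2) * exp (- v * (norm (z + - \<xi>))\<^sup>2 / 2)" for z
  proof -
    have H: "(norm (z + - \<xi>))\<^sup>2 = (norm \<xi>)\<^sup>2 + (norm z)\<^sup>2 - 2 * Re (cnj \<xi> * z)"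
      using norm_add_sq[of "- \<xi>" z] by (simp add: add.commute)
    have E: "v * Re (cnj \<xi> * z) + - v * (norm z)\<^sup>2 / 2 = v * (norm \<xi>)\<^sup>2 / 2 + - v * (norm (z + - \<xi>))\<^sup>2 / 2"
      unfolding H by (simp add: field_simps)
    have "norm (exp (cnj \<xi> * z)) powr v * exp (- v * (norm z)\<^sup>2 / 2) = exp (v * Re (cnj \<xi> * z) + - v * (norm z)\<^sup>2 / 2)"
      by (simp only: norm_exp_eq_Re exp_powr exp_add[symmetric])
    also have "\<dots> = exp (v * (norm \<xi>)\<^sup>2 / 2) * exp (- v * (norm (z + - \<xi>))\<^sup>2 / 2)"
      unfolding E exp_add ..
    finally show ?thesis .
  qed
  have "fock_integral v (\<lambda>z. exp (cnj \<xi> * z)) = (\<integral>\<^sup>+z. ennreal (exp (v * (norm \<xi>)\<^sup>2 / 2)) * ennreal (exp (- v * (norm (z + - \<xi>))\<^sup>2 / 2)) \<partial>lborel)"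
    unfolding fock_integral_def pt by (simp add: ennreal_mult)
  also have "\<dots> = ennreal (exp (v * (norm \<xi>)\<^sup>2 / 2)) * (\<integral>\<^sup>+z. ennreal (exp (- v * (norm (z + - \<xi>))\<^sup>2 / 2)) \<partial>lborel)"
    by (rule nn_integral_cmult) measurable
  also have "(\<integral>\<^sup>+z. ennreal (exp (- v * (norm (z + - \<xi>))\<^sup>2 / 2)) \<partial>lborel) = I0"
    unfolding I0_def by (rule nn_integral_complex_translate[where f = "\<lambda>z. ennreal (exp (- v * (norm z)\<^sup>2 / 2))"]) measurable
  finally show eq: "fock_integral v (\<lambda>z. exp (cnj \<xi> * z)) = ennreal (exp (v * (norm \<xi>)\<^sup>2 / 2)) * I0" .
  have "I0 = (\<integral>\<^sup>+z. ennreal (exp (- (v / 2) * (norm (z::complex))\<^sup>2)) \<partial>lborel)"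
    unfolding I0_def by simp
  also have "\<dots> < top" using v gauss2_finite[of "v/2"] by auto
  finally show fin: "I0 < top" .
  show "(\<lambda>z. exp (cnj \<xi> * z)) \<in> fock_space v"
    unfolding fock_space_def using eq fin
    by (auto intro!: holomorphic_intros simp: ennreal_mult_less_top)
qed

context wcs
begin

lemma ee_bounded:
  assumes bd: "bounded_on_fock v T"
  shows "\<exists>M. \<forall>u. ee a r l u \<le> M"
proof -
  obtain C where C: "\<And>f. f \<in> fock_space v \<Longrightarrow> fock_norm v (T f) \<le> C * fock_norm v f"
    and TF: "\<And>f. f \<in> fock_space v \<Longrightarrow> T f \<in> fock_space v"
    using bd unfolding bounded_on_fock_def by blast
  have v0: "v > 0" using v by simp
  define I0 where "I0 = (\<integral>\<^sup>+z. ennreal (exp (- v * (norm (z::complex))\<^sup>2 / 2)) \<partial>lborel)"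
  have "I0 < top" unfolding I0_def by (rule kernel_fock(2)[OF v0])
  then obtain I0' where I0': "I0 = ennreal I0'" "0 \<le> I0'" by (cases I0) auto
  define Kv where "Kv = (2/pi) * (32/pi) powr (v - 1) * exp (4 * v)"
  have Kv: "Kv > 0" by (simp add: Kv_def)
  define C1 where "C1 = \<bar>C\<bar>"
  define K3 where "K3 = Kv * C1 powr v * I0'"
  have main: "exp (v * (c + ee a r l (\<zeta> - z0))) \<le> K3" for \<zeta>
  proof -
    define \<xi> where "\<xi> = phi \<zeta>"
    define K where "K = (\<lambda>z. exp (cnj \<xi> * z))"
    have KF: "K \<in> fock_space v" unfolding K_def by (rule kernel_fock(3)[OF v0])
    define g where "g = T K"
    have gF: "g \<in> fock_space v" unfolding g_def by (rule TF[OF KF])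
    have gh: "g holomorphic_on UNIV" using gF by (simp add: fock_space_def)
    define L where "L = norm (g \<zeta>) powr v * exp (- v * (norm \<zeta>)\<^sup>2 / 2)"
    have "ennreal L \<le> ennreal Kv * fock_integral v g"
      unfolding L_def Kv_def by (rule fock_point_eval[OF gh v])
    also have "fock_integral v g = ennreal (2 * pi / v * fock_norm v g powr v)"
      by (rule fock_integral_norm[OF gF v0])
    also have "ennreal Kv * ennreal (2 * pi / v * fock_norm v g powr v) = ennreal (Kv * (2 * pi / v * fock_norm v g powr v))"
      by (rule ennreal_mult[symmetric]) (use Kv v0 in auto)
    finally have "ennreal L \<le> ennreal (Kv * (2 * pi / v * fock_norm v g powr v))" .
    then have L1: "L \<le> Kv * (2 * pi / v * fock_norm v g powr v)"
      using Kv v0 by (subst (asm) ennreal_le_iff) auto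
    have "ennreal (exp (v * (norm \<xi>)\<^sup>2 / 2)) * I0 = ennreal (2 * pi / v * fock_norm v K powr v)"
      using kernel_fock(1)[OF v0, of \<xi>] fock_integral_norm[OF KF v0] unfolding K_def I0_def by simp
    then have "exp (v * (norm \<xi>)\<^sup>2 / 2) * I0' = 2 * pi / v * fock_norm v K powr v"
      unfolding I0'(1) using I0'(2) v0 by (simp add: ennreal_mult[symmetric])
    then have nK: "fock_norm v K powr v = v / (2 * pi) * (exp (v * (norm \<xi>)\<^sup>2 / 2) * I0')"
      using v0 by (simp add: field_simps)
    have "fock_norm v g \<le> C1 * fock_norm v K"
      using C[OF KF] fock_norm_nonneg[of v K] unfolding g_def C1_def
      by (meson abs_ge_self mult_right_mono order_trans)
    then have "fock_norm v g powr v \<le> (C1 * fock_norm v K) powr v"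
      using v0 by (intro powr_mono2) (auto simp: fock_norm_nonneg)
    also have "\<dots> = C1 powr v * fock_norm v K powr v"
      by (simp add: powr_mult C1_def fock_norm_nonneg)
    finally have ng: "fock_norm v g powr v \<le> C1 powr v * (v / (2 * pi) * (exp (v * (norm \<xi>)\<^sup>2 / 2) * I0'))"
      unfolding nK .
    have "L \<le> Kv * (2 * pi / v * (C1 powr v * (v / (2 * pi) * (exp (v * (norm \<xi>)\<^sup>2 / 2) * I0'))))"
    proof -
      have "Kv * (2 * pi / v * fock_norm v g powr v) \<le> Kv * (2 * pi / v * (C1 powr v * (v / (2 * pi) * (exp (v * (norm \<xi>)\<^sup>2 / 2) * I0'))))"
        using ng Kv v0 by (intro mult_left_mono) auto
      then show ?thesis by (rule order_trans[OF L1])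
    qed
    also have "\<dots> = K3 * exp (v * (norm \<xi>)\<^sup>2 / 2)"
      using v0 by (simp add: K3_def field_simps)
    finally have L2: "L \<le> K3 * exp (v * (norm \<xi>)\<^sup>2 / 2)" .
    have gz: "norm (g \<zeta>) = norm (w \<zeta>) * exp ((norm \<xi>)\<^sup>2)"
    proof -
      have "cnj \<xi> * \<xi> = complex_of_real ((norm \<xi>)\<^sup>2)" by (metis complex_norm_square mult.commute)
      then show ?thesis unfolding g_def K_def T_apply \<xi>_def[symmetric] by (simp add: norm_mult)
    qed
    have "L = (norm (w \<zeta>) * exp (((norm \<xi>)\<^sup>2 - (norm \<zeta>)\<^sup>2) / 2)) powr v * exp (v * (norm \<xi>)\<^sup>2 / 2)"
    proof -
      have "L = norm (w \<zeta>) powr v * exp ((norm \<xi>)\<^sup>2) powr v * exp (- v * (norm \<zeta>)\<^sup>2 / 2)"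
        unfolding L_def gz by (simp add: powr_mult)
      also have "exp ((norm \<xi>)\<^sup>2) powr v = exp (v * (norm \<xi>)\<^sup>2)" by (rule exp_powr)
      also have "norm (w \<zeta>) powr v * exp (v * (norm \<xi>)\<^sup>2) * exp (- v * (norm \<zeta>)\<^sup>2 / 2)
          = norm (w \<zeta>) powr v * exp (v * (norm \<xi>)\<^sup>2 + - v * (norm \<zeta>)\<^sup>2 / 2)"
        by (simp only: exp_add mult.assoc)
      also have "v * (norm \<xi>)\<^sup>2 + - v * (norm \<zeta>)\<^sup>2 / 2 = v * (((norm \<xi>)\<^sup>2 - (norm \<zeta>)\<^sup>2) / 2) + v * (norm \<xi>)\<^sup>2 / 2"
        by (simp add: field_simps)
      also have "norm (w \<zeta>) powr v * exp (v * (((norm \<xi>)\<^sup>2 - (norm \<zeta>)\<^sup>2) / 2) + v * (norm \<xi>)\<^sup>2 / 2)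
          = norm (w \<zeta>) powr v * (exp (v * (((norm \<xi>)\<^sup>2 - (norm \<zeta>)\<^sup>2) / 2)) * exp (v * (norm \<xi>)\<^sup>2 / 2))"
        by (simp only: exp_add)
      also have "\<dots> = (norm (w \<zeta>) * exp (((norm \<xi>)\<^sup>2 - (norm \<zeta>)\<^sup>2) / 2)) powr v * exp (v * (norm \<xi>)\<^sup>2 / 2)"
        by (simp add: powr_mult exp_powr mult.commute)
      finally show ?thesis .
    qed
    also have "norm (w \<zeta>) * exp (((norm \<xi>)\<^sup>2 - (norm \<zeta>)\<^sup>2) / 2) = exp (c + ee a r l (\<zeta> - z0))"
      unfolding \<xi>_def by (rule key_identity)
    finally have "exp (v * (c + ee a r l (\<zeta> - z0))) * exp (v * (norm \<xi>)\<^sup>2 / 2) \<le> K3 * exp (v * (norm \<xi>)\<^sup>2 / 2)"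
      using L2 by (simp add: exp_powr)
    then show ?thesis by simp
  qed
  have K3: "K3 > 0" using main[of 0] exp_gt_zero[of "v * (c + ee a r l (0 - z0))"] by linarith
  have "ee a r l u \<le> ln K3 / v - c" for u
  proof -
    have "v * (c + ee a r l u) \<le> ln K3"
      using main[of "u + z0"] K3 by (simp add: ln_ge_iff)
    then show ?thesis using v0 by (simp add: field_simps)
  qed
  then show ?thesis by blast
qed

end

lemma gauss_shift_bound:
  fixes \<kappa> \<alpha> s :: real
  assumes k: "\<kappa> > 0" and al: "1/2 \<le> \<alpha>\<^sup>2"
  shows "(\<integral>\<^sup>+y. ennreal (exp (- \<kappa> * (\<alpha> * y + s)\<^sup>2)) \<partial>lborel)
     \<le> ennreal (sqrt 2) * (\<integral>\<^sup>+t. ennreal (exp (- \<kappa> * t\<^sup>2)) \<partial>lborel)"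
proof -
  have a0: "\<alpha> \<noteq> 0" using al by auto
  have "(\<integral>\<^sup>+t. ennreal (exp (- \<kappa> * t\<^sup>2)) \<partial>lborel) = ennreal \<bar>\<alpha>\<bar> * (\<integral>\<^sup>+y. ennreal (exp (- \<kappa> * (s + \<alpha> * y)\<^sup>2)) \<partial>lborel)"
    by (rule nn_integral_real_affine[OF _ a0]) simp
  then have eq: "ennreal (sqrt 2) * (\<integral>\<^sup>+t. ennreal (exp (- \<kappa> * t\<^sup>2)) \<partial>lborel)
      = ennreal (sqrt 2 * \<bar>\<alpha>\<bar>) * (\<integral>\<^sup>+y. ennreal (exp (- \<kappa> * (\<alpha> * y + s)\<^sup>2)) \<partial>lborel)"
    by (simp add: ennreal_mult mult.assoc add.commute)
  have "1 \<le> sqrt 2 * \<bar>\<alpha>\<bar>"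
  proof -
    have "1 \<le> sqrt (2 * \<alpha>\<^sup>2)" using al by simp
    also have "\<dots> = sqrt 2 * \<bar>\<alpha>\<bar>" by (simp add: real_sqrt_mult)
    finally show ?thesis .
  qed
  then have "(\<integral>\<^sup>+y. ennreal (exp (- \<kappa> * (\<alpha> * y + s)\<^sup>2)) \<partial>lborel)
     \<le> ennreal (sqrt 2 * \<bar>\<alpha>\<bar>) * (\<integral>\<^sup>+y. ennreal (exp (- \<kappa> * (\<alpha> * y + s)\<^sup>2)) \<partial>lborel)"
  proof -
    have e1: "(1::ennreal) \<le> ennreal (sqrt 2 * \<bar>\<alpha>\<bar>)" using ennreal_leI[OF \<open>1 \<le> sqrt 2 * \<bar>\<alpha>\<bar>\<close>] by simp
    show ?thesis using mult_right_mono[OF e1 zero_le, of "\<integral>\<^sup>+y. ennreal (exp (- \<kappa> * (\<alpha> * y + s)\<^sup>2)) \<partial>lborel"] by simp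
  qed
  then show ?thesis unfolding eq .
qed

lemma strip_bound:
  fixes \<kappa> \<alpha> \<beta> x1 y1 R :: real
  assumes k: "\<kappa> > 0" and ab: "\<alpha>\<^sup>2 + \<beta>\<^sup>2 = 1" and R: "0 \<le> R"
  shows "(\<integral>\<^sup>+x. \<integral>\<^sup>+y. ennreal (exp (- \<kappa> * (\<alpha> * y + \<beta> * x)\<^sup>2)) * indicator {x1..x1 + 2 * R} x * indicator {y1..y1 + 2 * R} y \<partial>lborel \<partial>lborel)
     \<le> ennreal (2 * R * sqrt 2) * (\<integral>\<^sup>+t. ennreal (exp (- \<kappa> * t\<^sup>2)) \<partial>lborel)"
proof -
  define Gs where "Gs = (\<integral>\<^sup>+t. ennreal (exp (- \<kappa> * t\<^sup>2)) \<partial>lborel)"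
  show ?thesis
  proof (cases "1/2 \<le> \<alpha>\<^sup>2")
    case True
    have "(\<integral>\<^sup>+x. \<integral>\<^sup>+y. ennreal (exp (- \<kappa> * (\<alpha> * y + \<beta> * x)\<^sup>2)) * indicator {x1..x1 + 2 * R} x * indicator {y1..y1 + 2 * R} y \<partial>lborel \<partial>lborel)
       \<le> (\<integral>\<^sup>+x. ennreal (sqrt 2) * Gs * indicator {x1..x1 + 2 * R} x \<partial>lborel)"
    proof (rule nn_integral_mono)
      fix x :: real assume "x \<in> space lborel"
      have "(\<integral>\<^sup>+y. ennreal (exp (- \<kappa> * (\<alpha> * y + \<beta> * x)\<^sup>2)) * indicator {x1..x1 + 2 * R} x * indicator {y1..y1 + 2 * R} y \<partial>lborel)
         \<le> (\<integral>\<^sup>+y. ennreal (exp (- \<kappa> * (\<alpha> * y + \<beta> * x)\<^sup>2)) * indicator {x1..x1 + 2 * R} x \<partial>lborel)"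
        by (intro nn_integral_mono) (auto simp: indicator_def)
      also have "\<dots> = (\<integral>\<^sup>+y. ennreal (exp (- \<kappa> * (\<alpha> * y + \<beta> * x)\<^sup>2)) \<partial>lborel) * indicator {x1..x1 + 2 * R} x"
        by (rule nn_integral_multc) measurable
      also have "\<dots> \<le> ennreal (sqrt 2) * Gs * indicator {x1..x1 + 2 * R} x"
        unfolding Gs_def by (intro mult_right_mono gauss_shift_bound[OF k True]) auto
      finally show "(\<integral>\<^sup>+y. ennreal (exp (- \<kappa> * (\<alpha> * y + \<beta> * x)\<^sup>2)) * indicator {x1..x1 + 2 * R} x * indicator {y1..y1 + 2 * R} y \<partial>lborel)
         \<le> ennreal (sqrt 2) * Gs * indicator {x1..x1 + 2 * R} x" .
    qed
    also have "\<dots> = ennreal (sqrt 2) * Gs * ennreal (2 * R)"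
      using R by (simp add: nn_integral_cmult_indicator)
    also have "\<dots> = ennreal (2 * R * sqrt 2) * Gs"
      using R by (simp add: ennreal_mult mult_ac)
    finally show ?thesis unfolding Gs_def .
  next
    case False
    then have bt: "1/2 \<le> \<beta>\<^sup>2" using ab by simp
    have "(\<integral>\<^sup>+x. \<integral>\<^sup>+y. ennreal (exp (- \<kappa> * (\<alpha> * y + \<beta> * x)\<^sup>2)) * indicator {x1..x1 + 2 * R} x * indicator {y1..y1 + 2 * R} y \<partial>lborel \<partial>lborel)
       = (\<integral>\<^sup>+y. \<integral>\<^sup>+x. ennreal (exp (- \<kappa> * (\<alpha> * y + \<beta> * x)\<^sup>2)) * indicator {x1..x1 + 2 * R} x * indicator {y1..y1 + 2 * R} y \<partial>lborel \<partial>lborel)"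
      by (rule lborel_pair.Fubini'[symmetric]) measurable
    also have "\<dots> \<le> (\<integral>\<^sup>+y. ennreal (sqrt 2) * Gs * indicator {y1..y1 + 2 * R} y \<partial>lborel)"
    proof (rule nn_integral_mono)
      fix y :: real assume "y \<in> space lborel"
      have "(\<integral>\<^sup>+x. ennreal (exp (- \<kappa> * (\<alpha> * y + \<beta> * x)\<^sup>2)) * indicator {x1..x1 + 2 * R} x * indicator {y1..y1 + 2 * R} y \<partial>lborel)
         \<le> (\<integral>\<^sup>+x. ennreal (exp (- \<kappa> * (\<beta> * x + \<alpha> * y)\<^sup>2)) * indicator {y1..y1 + 2 * R} y \<partial>lborel)"
        by (intro nn_integral_mono) (auto simp: indicator_def add.commute)
      also have "\<dots> = (\<integral>\<^sup>+x. ennreal (exp (- \<kappa> * (\<beta> * x + \<alpha> * y)\<^sup>2)) \<partial>lborel) * indicator {y1..y1 + 2 * R} y"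
        by (rule nn_integral_multc) measurable
      also have "\<dots> \<le> ennreal (sqrt 2) * Gs * indicator {y1..y1 + 2 * R} y"
        unfolding Gs_def by (intro mult_right_mono gauss_shift_bound[OF k bt]) auto
      finally show "(\<integral>\<^sup>+x. ennreal (exp (- \<kappa> * (\<alpha> * y + \<beta> * x)\<^sup>2)) * indicator {x1..x1 + 2 * R} x * indicator {y1..y1 + 2 * R} y \<partial>lborel)
         \<le> ennreal (sqrt 2) * Gs * indicator {y1..y1 + 2 * R} y" .
    qed
    also have "\<dots> = ennreal (sqrt 2) * Gs * ennreal (2 * R)"
      using R by (simp add: nn_integral_cmult_indicator)
    also have "\<dots> = ennreal (2 * R * sqrt 2) * Gs"
      using R by (simp add: ennreal_mult mult_ac)
    finally show ?thesis unfolding Gs_def .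
  qed
qed

context wcs
begin

lemma strip_complex:
  assumes k: "\<kappa> > 0" and s1: "norm \<sigma> = 1"
  shows "(\<integral>\<^sup>+z. ennreal (exp (- \<kappa> * (Im (\<sigma> * (z - z0)))\<^sup>2)) * indicator (cbox (Complex (-2) (-2)) (Complex 2 2)) (\<xi> - (phi ^^ n) z) \<partial>lborel)
     \<le> ennreal (6 * sqrt 2 / norm a ^ n) * (\<integral>\<^sup>+t. ennreal (exp (- \<kappa> * t\<^sup>2)) \<partial>lborel)"
proof -
  define R where "R = 3 / norm a ^ n"
  define d where "d = (\<xi> - z0) / a ^ n"
  have an: "a ^ n \<noteq> 0" using a0 by auto
  have R0: "0 \<le> R" by (simp add: R_def)
  define I1 where "I1 = {Re d - R..Re d - R + 2 * R}"
  define I2 where "I2 = {Im d - R..Im d - R + 2 * R}"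
  define Bx where "Bx = cbox (Complex (-2) (-2)) (Complex 2 2)"
  have [measurable]: "Bx \<in> sets borel" unfolding Bx_def by simp
  have ind: "indicator Bx (\<xi> - (phi ^^ n) z) \<le> (indicator I1 (Re (z - z0)) * indicator I2 (Im (z - z0)) :: ennreal)" for z
  proof (cases "\<xi> - (phi ^^ n) z \<in> Bx")
    case True
    have "(norm (\<xi> - (phi ^^ n) z))\<^sup>2 \<le> 3\<^sup>2" using box4_norm[of "\<xi> - (phi ^^ n) z"] True unfolding Bx_def by simp
    then have n3: "norm (\<xi> - (phi ^^ n) z) \<le> 3" by (rule power2_le_imp_le) simp
    have "\<xi> - (phi ^^ n) z = a ^ n * (d - (z - z0))" unfolding phi_iter d_def using an by (simp add: field_simps)
    then have "norm a ^ n * norm (d - (z - z0)) \<le> 3" using n3 by (simp add: norm_mult norm_power)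
    then have dz: "norm (d - (z - z0)) \<le> R" unfolding R_def using a0 by (simp add: field_simps mult.commute)
    have "\<bar>Re (d - (z - z0))\<bar> \<le> R" "\<bar>Im (d - (z - z0))\<bar> \<le> R"
      using abs_Re_le_cmod[of "d - (z - z0)"] abs_Im_le_cmod[of "d - (z - z0)"] dz by linarith+
    then have "Re (z - z0) \<in> I1" "Im (z - z0) \<in> I2" unfolding I1_def I2_def abs_le_iff by auto
    then show ?thesis by (simp add: indicator_def)
  qed simp
  define f where "f = (\<lambda>u. ennreal (exp (- \<kappa> * (Im (\<sigma> * u))\<^sup>2)) * indicator I1 (Re u) * indicator I2 (Im u))"
  have fm[measurable]: "f \<in> borel_measurable borel" unfolding f_def I1_def I2_def by measurable
  have "(\<integral>\<^sup>+z. ennreal (exp (- \<kappa> * (Im (\<sigma> * (z - z0)))\<^sup>2)) * indicator Bx (\<xi> - (phi ^^ n) z) \<partial>lborel)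
     \<le> (\<integral>\<^sup>+z. f (z + - z0) \<partial>lborel)"
  proof (intro nn_integral_mono)
    fix z :: complex
    have "ennreal (exp (- \<kappa> * (Im (\<sigma> * (z - z0)))\<^sup>2)) * indicator Bx (\<xi> - (phi ^^ n) z)
       \<le> ennreal (exp (- \<kappa> * (Im (\<sigma> * (z - z0)))\<^sup>2)) * (indicator I1 (Re (z - z0)) * indicator I2 (Im (z - z0)))"
      by (rule mult_left_mono[OF ind]) simp
    then show "ennreal (exp (- \<kappa> * (Im (\<sigma> * (z - z0)))\<^sup>2)) * indicator Bx (\<xi> - (phi ^^ n) z) \<le> f (z + - z0)"
      unfolding f_def by (simp only: mult.assoc diff_conv_add_uminus)
  qed
  also have "\<dots> = (\<integral>\<^sup>+u. f u \<partial>lborel)" by (rule nn_integral_complex_translate) measurable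
  also have "\<dots> = (\<integral>\<^sup>+x. \<integral>\<^sup>+y. ennreal (exp (- \<kappa> * (Re \<sigma> * y + Im \<sigma> * x)\<^sup>2)) * indicator I1 x * indicator I2 y \<partial>lborel \<partial>lborel)"
    unfolding nn_integral_complex[OF fm] by (simp add: f_def algebra_simps)
  also have "\<dots> \<le> ennreal (2 * R * sqrt 2) * (\<integral>\<^sup>+t. ennreal (exp (- \<kappa> * t\<^sup>2)) \<partial>lborel)"
    unfolding I1_def I2_def
  proof (rule strip_bound[OF k _ R0])
    show "(Re \<sigma>)\<^sup>2 + (Im \<sigma>)\<^sup>2 = 1" using s1 by (simp add: cmod_power2[symmetric])
  qed
  also have "2 * R * sqrt 2 = 6 * sqrt 2 / norm a ^ n" by (simp add: R_def)
  finally show ?thesis unfolding Bx_def .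
qed

end

context wcs
begin

lemma key_estimate:
  assumes M: "\<And>u. ee a r l u \<le> M" and B: "\<And>n u. (\<Sum>k<n. ee a r l (a ^ k * u)) \<le> B"
    and s1: "norm \<sigma> = 1" and dec: "\<And>u. ee a r l u \<le> 2 * M - norm r * (Im (\<sigma> * u))\<^sup>2"
    and f: "f \<in> fock_space v" and n: "n \<ge> 1"
  shows "fock_integral v ((T ^^ n) f) \<le>
     ennreal (exp (v * (n * c)) * exp (v * (2 * M + B)) * ((2/pi) * (32/pi) powr (v - 1) * exp (4 * v)) * (6 * sqrt 2 / norm a ^ n))
     * (\<integral>\<^sup>+t. ennreal (exp (- (v * norm r) * t\<^sup>2)) \<partial>lborel) * fock_integral v f"
proof -
  have v0: "v > 0" using v by simp
  define \<kappa> where "\<kappa> = v * norm r"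
  have k: "\<kappa> > 0" using v0 r0 by (simp add: \<kappa>_def)
  define Kv where "Kv = (2/pi) * (32/pi) powr (v - 1) * exp (4 * v)"
  have Kv: "Kv > 0" by (simp add: Kv_def)
  define Q where "Q = exp (v * (2 * M + B))"
  define Gs where "Gs = (\<integral>\<^sup>+t. ennreal (exp (- \<kappa> * t\<^sup>2)) \<partial>lborel)"
  define E where "E = (\<lambda>z. exp (- \<kappa> * (Im (\<sigma> * (z - z0)))\<^sup>2))"
  define Ff where "Ff = (\<lambda>z. norm (f z) powr v * exp (- v * (norm z)\<^sup>2 / 2))"
  define Bx where "Bx = cbox (Complex (-2) (-2)) (Complex 2 2)"
  define P where "P = (\<lambda>z. z0 + a ^ n * (z - z0))"
  have Pn: "(phi ^^ n) z = P z" for z by (simp add: phi_iter P_def)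
  have fh: "f holomorphic_on UNIV" using f by (simp add: fock_space_def)
  have [measurable]: "f \<in> borel_measurable borel"
    using fh holomorphic_on_imp_continuous_on borel_measurable_continuous_onI by blast
  have [measurable]: "Bx \<in> sets borel" unfolding Bx_def by simp
  have Ffm[measurable]: "Ff \<in> borel_measurable borel" unfolding Ff_def by measurable
  have Em[measurable]: "E \<in> borel_measurable borel" unfolding E_def by measurable
  have Pm[measurable]: "P \<in> borel_measurable borel" unfolding P_def by measurable
  obtain m where m: "n = Suc m" using n by (cases n) auto
  have stepA: "norm ((T ^^ n) f z) powr v * exp (- v * (norm z)\<^sup>2 / 2) \<le> exp (v * (n * c)) * Q * E z * Ff (P z)" for z
  proof -
    define u where "u = z - z0"
    have "(\<Sum>k<n. ee a r l (a ^ k * u)) = ee a r l u + (\<Sum>k<m. ee a r l (a ^ k * (a * u)))"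
      unfolding m sum.lessThan_Suc_shift by (simp add: mult_ac)
    also have "\<dots> \<le> (2 * M - norm r * (Im (\<sigma> * u))\<^sup>2) + B" using dec[of u] B[where n=m and u="a * u"] by linarith
    finally have S: "(\<Sum>k<n. ee a r l (a ^ k * u)) \<le> 2 * M - norm r * (Im (\<sigma> * u))\<^sup>2 + B" .
    have "v * (n * c + (\<Sum>k<n. ee a r l (a ^ k * u))) \<le> v * (n * c) + v * (2 * M + B) + (- \<kappa> * (Im (\<sigma> * u))\<^sup>2)"
      using mult_left_mono[OF S, of v] v0 by (simp add: \<kappa>_def algebra_simps)
    then have "exp (v * (n * c + (\<Sum>k<n. ee a r l (a ^ k * u)))) \<le> exp (v * (n * c)) * Q * E z"
      unfolding Q_def E_def u_def[symmetric] by (simp add: exp_add[symmetric])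
    then have "exp (v * (n * c + (\<Sum>k<n. ee a r l (a ^ k * u)))) * Ff (P z) \<le> exp (v * (n * c)) * Q * E z * Ff (P z)"
      by (intro mult_right_mono) (auto simp: Ff_def)
    then show ?thesis unfolding integrand_iter Pn u_def Ff_def .
  qed
  have stepBC: "ennreal (Ff (P z)) \<le> ennreal Kv * (\<integral>\<^sup>+\<xi>. ennreal (Ff \<xi>) * indicator Bx (\<xi> - P z) \<partial>lborel)" for z
  proof -
    have "ennreal (Ff (P z)) \<le> ennreal Kv * (\<integral>\<^sup>+\<eta>. ennreal (Ff (P z + \<eta>)) * indicator Bx \<eta> \<partial>lborel)"
      using fock_local[OF fh v, of "P z"] unfolding Ff_def Kv_def Bx_def .
    also have "(\<integral>\<^sup>+\<eta>. ennreal (Ff (P z + \<eta>)) * indicator Bx \<eta> \<partial>lborel) = (\<integral>\<^sup>+\<xi>. ennreal (Ff \<xi>) * indicator Bx (\<xi> - P z) \<partial>lborel)"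
    proof -
      have "(\<integral>\<^sup>+\<xi>. ennreal (Ff (P z + (\<xi> + - P z))) * indicator Bx (\<xi> + - P z) \<partial>lborel) = (\<integral>\<^sup>+\<eta>. ennreal (Ff (P z + \<eta>)) * indicator Bx \<eta> \<partial>lborel)"
        by (rule nn_integral_complex_translate[where f = "\<lambda>\<eta>. ennreal (Ff (P z + \<eta>)) * indicator Bx \<eta>"]) measurable
      then show ?thesis by simp
    qed
    finally show ?thesis .
  qed
  have "fock_integral v ((T ^^ n) f) \<le> (\<integral>\<^sup>+z. ennreal (exp (v * (n * c)) * Q * E z) * (ennreal Kv * (\<integral>\<^sup>+\<xi>. ennreal (Ff \<xi>) * indicator Bx (\<xi> - P z) \<partial>lborel)) \<partial>lborel)"
    unfolding fock_integral_def
  proof (rule nn_integral_mono)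
    fix z :: complex assume "z \<in> space lborel"
    have "ennreal (norm ((T ^^ n) f z) powr v * exp (- v * (norm z)\<^sup>2 / 2)) \<le> ennreal (exp (v * (n * c)) * Q * E z * Ff (P z))"
      using stepA[of z] by (rule ennreal_leI)
    also have "\<dots> = ennreal (exp (v * (n * c)) * Q * E z) * ennreal (Ff (P z))"
      by (rule ennreal_mult) (auto simp: Q_def E_def Ff_def)
    also have "\<dots> \<le> ennreal (exp (v * (n * c)) * Q * E z) * (ennreal Kv * (\<integral>\<^sup>+\<xi>. ennreal (Ff \<xi>) * indicator Bx (\<xi> - P z) \<partial>lborel))"
      by (intro mult_left_mono stepBC) auto
    finally show "ennreal (norm ((T ^^ n) f z) powr v * exp (- v * (norm z)\<^sup>2 / 2)) \<le> ennreal (exp (v * (n * c)) * Q * E z) * (ennreal Kv * (\<integral>\<^sup>+\<xi>. ennreal (Ff \<xi>) * indicator Bx (\<xi> - P z) \<partial>lborel))" .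
  qed
  also have "\<dots> = ennreal (exp (v * (n * c)) * Q * Kv) * (\<integral>\<^sup>+z. \<integral>\<^sup>+\<xi>. ennreal (E z) * (ennreal (Ff \<xi>) * indicator Bx (\<xi> - P z)) \<partial>lborel \<partial>lborel)"
  proof -
    have "(\<integral>\<^sup>+z. ennreal (exp (v * (n * c)) * Q * E z) * (ennreal Kv * (\<integral>\<^sup>+\<xi>. ennreal (Ff \<xi>) * indicator Bx (\<xi> - P z) \<partial>lborel)) \<partial>lborel)
      = (\<integral>\<^sup>+z. ennreal (exp (v * (n * c)) * Q * Kv) * (\<integral>\<^sup>+\<xi>. ennreal (E z) * (ennreal (Ff \<xi>) * indicator Bx (\<xi> - P z)) \<partial>lborel) \<partial>lborel)"
    proof (intro nn_integral_cong)
      fix z :: complex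
      have "ennreal (exp (v * (n * c)) * Q * E z) * (ennreal Kv * (\<integral>\<^sup>+\<xi>. ennreal (Ff \<xi>) * indicator Bx (\<xi> - P z) \<partial>lborel))
         = ennreal (exp (v * (n * c)) * Q * Kv) * (ennreal (E z) * (\<integral>\<^sup>+\<xi>. ennreal (Ff \<xi>) * indicator Bx (\<xi> - P z) \<partial>lborel))"
        using Kv by (simp add: ennreal_mult Q_def E_def mult_ac)
      also have "ennreal (E z) * (\<integral>\<^sup>+\<xi>. ennreal (Ff \<xi>) * indicator Bx (\<xi> - P z) \<partial>lborel) = (\<integral>\<^sup>+\<xi>. ennreal (E z) * (ennreal (Ff \<xi>) * indicator Bx (\<xi> - P z)) \<partial>lborel)"
        by (rule nn_integral_cmult[symmetric]) measurable
      finally show "ennreal (exp (v * (n * c)) * Q * E z) * (ennreal Kv * (\<integral>\<^sup>+\<xi>. ennreal (Ff \<xi>) * indicator Bx (\<xi> - P z) \<partial>lborel))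
         = ennreal (exp (v * (n * c)) * Q * Kv) * (\<integral>\<^sup>+\<xi>. ennreal (E z) * (ennreal (Ff \<xi>) * indicator Bx (\<xi> - P z)) \<partial>lborel)" .
    qed
    also have "\<dots> = ennreal (exp (v * (n * c)) * Q * Kv) * (\<integral>\<^sup>+z. \<integral>\<^sup>+\<xi>. ennreal (E z) * (ennreal (Ff \<xi>) * indicator Bx (\<xi> - P z)) \<partial>lborel \<partial>lborel)"
      by (rule nn_integral_cmult) measurable
    finally show ?thesis .
  qed
  also have "(\<integral>\<^sup>+z. \<integral>\<^sup>+\<xi>. ennreal (E z) * (ennreal (Ff \<xi>) * indicator Bx (\<xi> - P z)) \<partial>lborel \<partial>lborel)
      = (\<integral>\<^sup>+\<xi>. \<integral>\<^sup>+z. ennreal (E z) * (ennreal (Ff \<xi>) * indicator Bx (\<xi> - P z)) \<partial>lborel \<partial>lborel)"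
    by (rule lborel_pair.Fubini'[symmetric]) measurable
  also have "\<dots> \<le> (\<integral>\<^sup>+\<xi>. ennreal (Ff \<xi>) * (ennreal (6 * sqrt 2 / norm a ^ n) * Gs) \<partial>lborel)"
  proof (rule nn_integral_mono)
    fix \<xi> :: complex assume "\<xi> \<in> space lborel"
    have "(\<integral>\<^sup>+z. ennreal (E z) * (ennreal (Ff \<xi>) * indicator Bx (\<xi> - P z)) \<partial>lborel)
       = ennreal (Ff \<xi>) * (\<integral>\<^sup>+z. ennreal (E z) * indicator Bx (\<xi> - P z) \<partial>lborel)"
      by (subst nn_integral_cmult[symmetric]) (measurable, simp add: mult_ac)
    also have "(\<integral>\<^sup>+z. ennreal (E z) * indicator Bx (\<xi> - P z) \<partial>lborel) \<le> ennreal (6 * sqrt 2 / norm a ^ n) * Gs"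
      using strip_complex[OF k s1, of \<xi> n] unfolding E_def Bx_def Gs_def Pn .
    finally show "(\<integral>\<^sup>+z. ennreal (E z) * (ennreal (Ff \<xi>) * indicator Bx (\<xi> - P z)) \<partial>lborel) \<le> ennreal (Ff \<xi>) * (ennreal (6 * sqrt 2 / norm a ^ n) * Gs)"
      by (simp add: mult_left_mono)
  qed
  also have "\<dots> = (ennreal (6 * sqrt 2 / norm a ^ n) * Gs) * fock_integral v f"
    unfolding fock_integral_def Ff_def by (subst nn_integral_multc) (measurable, simp add: mult.commute)
  finally have "fock_integral v ((T ^^ n) f) \<le> ennreal (exp (v * (n * c)) * Q * Kv) * (ennreal (6 * sqrt 2 / norm a ^ n) * Gs * fock_integral v f)"
    by (simp add: mult.assoc mult_left_mono)
  also have "\<dots> = ennreal (exp (v * (n * c)) * Q * Kv * (6 * sqrt 2 / norm a ^ n)) * Gs * fock_integral v f"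
  proof -
    have e: "ennreal (exp (v * (n * c)) * Q * Kv * (6 * sqrt 2 / norm a ^ n)) = ennreal (exp (v * (n * c)) * Q * Kv) * ennreal (6 * sqrt 2 / norm a ^ n)"
      by (rule ennreal_mult) (use Kv in \<open>auto simp: Q_def\<close>)
    show ?thesis unfolding e by (simp only: mult.assoc)
  qed
  finally show ?thesis unfolding Q_def Kv_def Gs_def \<kappa>_def .
qed

lemma part2:
  assumes bd: "bounded_on_fock v T" and cl: "c - ln (norm a) < 0"
  shows "power_bounded_on_fock v T"
proof -
  have v0: "v > 0" using v by simp
  obtain M where M: "\<And>u. ee a r l u \<le> M" using ee_bounded[OF bd] by blast
  obtain B where B: "\<And>n u. (\<Sum>k<n. ee a r l (a ^ k * u)) \<le> B"
    using ee_sum_bound[OF M a0 a1 r0 r1] by blast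
  have rne: "r \<noteq> 0" using r0 by auto
  obtain \<sigma> where s1: "norm \<sigma> = 1" and dec: "\<And>u. ee a r l u \<le> 2 * M - norm r * (Im (\<sigma> * u))\<^sup>2"
    using ee_decay[OF M r1 rne] by blast
  define Gs where "Gs = (\<integral>\<^sup>+t. ennreal (exp (- (v * norm r) * t\<^sup>2)) \<partial>lborel)"
  have "Gs < top" unfolding Gs_def using gauss_nn_integral_finite[of "v * norm r"] v0 r0 by auto
  then obtain Gs' where Gs': "Gs = ennreal Gs'" "0 \<le> Gs'" by (cases Gs) auto
  define Kv where "Kv = (2/pi) * (32/pi) powr (v - 1) * exp (4 * v)"
  have Kv: "Kv > 0" by (simp add: Kv_def)
  define Q where "Q = exp (v * (2 * M + B))"
  have Q: "Q > 0" by (simp add: Q_def)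
  define Cst where "Cst = Q * Kv * (6 * sqrt 2) * Gs'"
  have Cst: "0 \<le> Cst" using Q Kv Gs' by (simp add: Cst_def)
  have c0: "c < 0" using cl a1 a0 ln_less_zero[of "norm a"] by linarith
  have "v * c \<le> c" using c0 v by (simp add: mult_le_cancel_right1)
  then have "v * c < ln (norm a)" using cl by linarith
  then have evc: "exp (v * c) < norm a" using a0 by (metis exp_less_cancel_iff exp_ln)
  define \<rho> where "\<rho> = exp (v * c) / norm a"
  have \<rho>: "0 \<le> \<rho>" "\<rho> \<le> 1" using evc a0 by (auto simp: \<rho>_def)
  have est: "fock_integral v ((T ^^ n) f) \<le> ennreal Cst * fock_integral v f"
    if f: "f \<in> fock_space v" and n: "n \<ge> 1" for n f
  proof -
    have "fock_integral v ((T ^^ n) f) \<le>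
     ennreal (exp (v * (n * c)) * Q * Kv * (6 * sqrt 2 / norm a ^ n)) * Gs * fock_integral v f"
      using key_estimate[OF M B s1 dec f n] unfolding Q_def Kv_def Gs_def .
    also have "exp (v * (n * c)) * Q * Kv * (6 * sqrt 2 / norm a ^ n) = Q * Kv * (6 * sqrt 2) * \<rho> ^ n"
    proof -
      have "exp (v * (n * c)) = exp (v * c) ^ n" by (simp add: exp_of_nat_mult[symmetric] mult_ac)
      then show ?thesis by (simp add: \<rho>_def power_divide)
    qed
    also have "ennreal (Q * Kv * (6 * sqrt 2) * \<rho> ^ n) * Gs = ennreal (Cst * \<rho> ^ n)"
      unfolding Gs'(1) Cst_def using Q Kv Gs' \<rho> by (simp add: ennreal_mult[symmetric] mult_ac)
    also have "ennreal (Cst * \<rho> ^ n) \<le> ennreal Cst"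
      using Cst \<rho> by (intro ennreal_leI mult_left_le power_le_one) auto
    finally show ?thesis by (simp add: mult_right_mono)
  qed
  have "fock_norm v ((T ^^ n) f) \<le> Cst powr (1 / v) * fock_norm v f"
    if f: "f \<in> fock_space v" and n: "n \<ge> 1" for n f
  proof -
    have "fock_integral v f < top" using f by (simp add: fock_space_def)
    then obtain X where X: "fock_integral v f = ennreal X" "0 \<le> X" by (cases "fock_integral v f") auto
    have "fock_integral v ((T ^^ n) f) \<le> ennreal (Cst * X)"
      using est[OF f n] X Cst by (simp add: ennreal_mult)
    then have "fock_norm v ((T ^^ n) f) \<le> (v / (2 * pi) * (Cst * X)) powr (1 / v)"
      using Cst X by (intro fock_norm_le[OF v0]) auto
    also have "\<dots> = Cst powr (1 / v) * (v / (2 * pi) * X) powr (1 / v)"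
      using Cst X v0 by (simp add: powr_mult[symmetric] mult_ac)
    also have "(v / (2 * pi) * X) powr (1 / v) = fock_norm v f"
      unfolding fock_norm_def X(1) using X(2) by simp
    finally show ?thesis .
  qed
  then show ?thesis unfolding power_bounded_on_fock_def by blast
qed

end

theorem theorem3p4:
  fixes \<nu> :: real and a b p q r :: complex
  assumes "1 \<le> \<nu>"
    and "0 < norm a" and "norm a < 1"
    and "0 < norm r" and "norm r \<le> (1 - (norm a)\<^sup>2) / 2"
    and "bounded_on_fock \<nu> (wcomp (\<lambda>z. exp (p + q * z + r * z\<^sup>2)) (\<lambda>z. a * z + b))"
  shows "(Re p + Re (q * b / (1 - a)) + Re (r * b\<^sup>2 / (1 - a)\<^sup>2) > 0 \<longrightarrow>
           \<not> power_bounded_on_fock \<nu> (wcomp (\<lambda>z. exp (p + q * z + r * z\<^sup>2)) (\<lambda>z. a * z + b))) \<and>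
         (Re p + Re (q * b / (1 - a)) + Re (r * b\<^sup>2 / (1 - a)\<^sup>2) - ln (norm a) < 0 \<longrightarrow>
           power_bounded_on_fock \<nu> (wcomp (\<lambda>z. exp (p + q * z + r * z\<^sup>2)) (\<lambda>z. a * z + b)))"
proof -
  interpret W: wcs \<nu> a b p q r
    using assms(1-5) by unfold_locales
  have TT: "W.T = wcomp (\<lambda>z. exp (p + q * z + r * z\<^sup>2)) (\<lambda>z. a * z + b)"
    by (simp add: W.T_def W.w_def W.phi_def)
  have bd: "bounded_on_fock \<nu> W.T" using assms(6) unfolding TT .
  show ?thesis
    using W.part1[OF bd] W.part2[OF bd] unfolding TT W.c_eq by blast
qed

end
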